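(* Let $N\ge2$, let $\Omega\subset\mathbb{R}^N$ be a bounded domain, let $F,Q$ be as in the context, and let $\lambda_1=\min_{u\in W_0^{1,2}(\Omega)\setminus\{0\}}\frac{\int_\Omega F^2(\nabla u)\,dx}{\int_\Omega u^2\,dx}$ be the first eigenvalue of the Finsler Laplacian on $\Omega$ with Dirichlet boundary condition. If $\lambda>\lambda_1$, then the problem $-Qu=\lambda e^u$ in $\Omega$, $u=0$ on $\partial\Omega$ has no (weak) solution $u\in W_0^{1,2}(\Omega)$.
   Context: Standing assumptions on $F$: $F:\mathbb{R}^N\to[0,\infty)$ is convex, $F\in C^2(\mathbb{R}^N\setminus\{0\})$, $F(t\xi)=|t|F(\xi)$ for all $t\in\mathbb{R}$, $\xi\in\mathbb{R}^N$, $F(\xi)>0$ for $\xi\neq 0$; there are constants $0<a\le b<\infty$ with $a|\xi|\le F(\xi)\le b|\xi|$, and constants $0<\mu\le\Lambda<\infty$ with $\mu^2|V|^2\le\sum_{i,j}F_{\xi_i\xi_j}(\xi)V_iV_j\le\Lambda|V|^2$ for all $\xi$ with $|\xi|=1$ and all $V\perp\xi$. $Qu:=\sum_{i=1}^N\partial_{x_i}\big(F(\nabla u)F_{\xi_i}(\nabla u)\big)$. A weak solution is $u\in W_0^{1,2}(\Omega)$ with $e^u\in L^1_{loc}(\Omega)$ and $\int_\Omega F(\nabla u)F_\xi(\nabla u)\cdot\nabla\phi\,dx=\lambda\int_\Omega e^u\phi\,dx$ for all $\phi\in C_c^\infty(\Omega)$. *)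

theory Defs
  imports "HOL-Analysis.Analysis"
begin

(* Euclidean space R^N is modelled as real^'n, N = CARD('n). *)

definition pd :: "'n::finite \<Rightarrow> (real^'n \<Rightarrow> real) \<Rightarrow> real^'n \<Rightarrow> real" where
  "pd i f x = frechet_derivative f (at x) (axis i 1)"

definition grad :: "(real^'n::finite \<Rightarrow> real) \<Rightarrow> real^'n \<Rightarrow> real^'n" where
  "grad f x = (\<chi> i. pd i f x)"

fun iter_pd :: "'n::finite list \<Rightarrow> (real^'n \<Rightarrow> real) \<Rightarrow> real^'n \<Rightarrow> real" where
  "iter_pd [] f = f"
| "iter_pd (i # is) f = pd i (iter_pd is f)"

definition smooth :: "(real^'n::finite \<Rightarrow> real) \<Rightarrow> bool" where
  "smooth f \<longleftrightarrow> (\<forall>is x. iter_pd is f differentiable (at x))"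

definition test_fun :: "(real^'n::finite) set \<Rightarrow> (real^'n \<Rightarrow> real) \<Rightarrow> bool" where
  "test_fun \<Omega> \<phi> \<longleftrightarrow> smooth \<phi> \<and> compact (closure {x. \<phi> x \<noteq> 0})
      \<and> closure {x. \<phi> x \<noteq> 0} \<subseteq> \<Omega>"

text \<open>u belongs to W_0^{1,2}(Omega) with (weak) gradient g: u, g are in L^2(Omega) and
  (u, g) is the L^2-limit of (phi_k, grad phi_k) for test functions phi_k
  (i.e. W_0^{1,2} is the closure of C_c^infinity(Omega) in the W^{1,2} norm).\<close>
definition W012 :: "(real^'n::finite) set \<Rightarrow> (real^'n \<Rightarrow> real) \<Rightarrow> (real^'n \<Rightarrow> real^'n) \<Rightarrow> bool" where
  "W012 \<Omega> u g \<longleftrightarrow>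
     set_borel_measurable lebesgue \<Omega> u \<and> set_integrable lebesgue \<Omega> (\<lambda>x. (u x)\<^sup>2) \<and>
     set_borel_measurable lebesgue \<Omega> g \<and> set_integrable lebesgue \<Omega> (\<lambda>x. (norm (g x))\<^sup>2) \<and>
     (\<exists>\<phi> :: nat \<Rightarrow> real^'n \<Rightarrow> real. (\<forall>k. test_fun \<Omega> (\<phi> k)) \<and>
        (\<lambda>k. LINT x:\<Omega>|lebesgue. (\<phi> k x - u x)\<^sup>2) \<longlonglongrightarrow> 0 \<and>
        (\<lambda>k. LINT x:\<Omega>|lebesgue. (norm (grad (\<phi> k) x - g x))\<^sup>2) \<longlonglongrightarrow> 0)"

definition hess :: "(real^'n::finite \<Rightarrow> real) \<Rightarrow> real^'n \<Rightarrow> 'n \<Rightarrow> 'n \<Rightarrow> real" where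
  "hess F \<xi> i j = pd j (pd i F) \<xi>"

definition finsler_admissible :: "(real^'n::finite \<Rightarrow> real) \<Rightarrow> bool" where
  "finsler_admissible F \<longleftrightarrow>
     (\<forall>\<xi>. F \<xi> \<ge> 0) \<and> convex_on UNIV F \<and>
     \<comment> \<open>F in C^2(R^N minus 0)\<close>
     (\<forall>\<xi>. \<xi> \<noteq> 0 \<longrightarrow> F differentiable (at \<xi>)) \<and>
     (\<forall>i \<xi>. \<xi> \<noteq> 0 \<longrightarrow> pd i F differentiable (at \<xi>)) \<and>
     (\<forall>i j. continuous_on (UNIV - {0}) (\<lambda>\<xi>. hess F \<xi> i j)) \<and>
     (\<forall>t \<xi>. F (t *\<^sub>R \<xi>) = \<bar>t\<bar> * F \<xi>) \<and>
     (\<forall>\<xi>. \<xi> \<noteq> 0 \<longrightarrow> F \<xi> > 0) \<and>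
     (\<exists>a b. 0 < a \<and> a \<le> b \<and> (\<forall>\<xi>. a * norm \<xi> \<le> F \<xi> \<and> F \<xi> \<le> b * norm \<xi>)) \<and>
     (\<exists>\<mu> \<Lambda>. 0 < \<mu> \<and> \<mu> \<le> \<Lambda> \<and>
        (\<forall>\<xi> V. norm \<xi> = 1 \<longrightarrow> \<xi> \<bullet> V = 0 \<longrightarrow>
           \<mu>\<^sup>2 * (norm V)\<^sup>2 \<le> (\<Sum>i\<in>UNIV. \<Sum>j\<in>UNIV. hess F \<xi> i j * V $ i * V $ j) \<and>
           (\<Sum>i\<in>UNIV. \<Sum>j\<in>UNIV. hess F \<xi> i j * V $ i * V $ j) \<le> \<Lambda> * (norm V)\<^sup>2))"

text \<open>First Dirichlet eigenvalue of the Finsler Laplacian (infimum = minimum of the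
  Rayleigh quotient over nonzero elements of W_0^{1,2}).\<close>
definition lambda1 :: "(real^'n::finite \<Rightarrow> real) \<Rightarrow> (real^'n) set \<Rightarrow> real" where
  "lambda1 F \<Omega> = Inf {(LINT x:\<Omega>|lebesgue. (F (g x))\<^sup>2) / (LINT x:\<Omega>|lebesgue. (u x)\<^sup>2) | u g.
       W012 \<Omega> u g \<and> (LINT x:\<Omega>|lebesgue. (u x)\<^sup>2) \<noteq> 0}"

text \<open>Weak solution of -Qu = lambda e^u in Omega, u = 0 on the boundary.
  F(xi) F_xi(xi) . V is written F xi * DF(xi)(V) with DF the Frechet derivative
  (at xi = 0 the product is 0 since F 0 = 0).\<close>
definition weak_solution :: "(real^'n::finite \<Rightarrow> real) \<Rightarrow> (real^'n) set \<Rightarrow> real \<Rightarrow> (real^'n \<Rightarrow> real) \<Rightarrow> bool" where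
  "weak_solution F \<Omega> lam u \<longleftrightarrow>
     (\<exists>g. W012 \<Omega> u g \<and>
        (\<forall>K. compact K \<and> K \<subseteq> \<Omega> \<longrightarrow> set_integrable lebesgue K (\<lambda>x. exp (u x))) \<and>
        (\<forall>\<phi>. test_fun \<Omega> \<phi> \<longrightarrow>
           (LINT x:\<Omega>|lebesgue. F (g x) * frechet_derivative F (at (g x)) (grad \<phi> x))
             = lam * (LINT x:\<Omega>|lebesgue. exp (u x) * \<phi> x)))"

end

theory Submission
  imports Defs "HOL-Computational_Algebra.Polynomial"
begin


lemma pd_eq:
  assumes "(f has_derivative f') (at x)"
  shows "pd i f x = f' (axis i 1)"
  using frechet_derivative_at[OF assms] unfolding pd_def by simp

lemma iter_pd_snoc: "iter_pd (is @ [i]) f = iter_pd is (pd i f)"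
  by (induction "is") auto

fun Dn :: "nat \<Rightarrow> (real^'n::finite \<Rightarrow> real) \<Rightarrow> bool" where
  "Dn 0 f = (\<forall>x. f differentiable (at x))"
| "Dn (Suc n) f = ((\<forall>x. f differentiable (at x)) \<and> (\<forall>i. Dn n (pd i f)))"

lemma Dn_diff: "Dn n f \<Longrightarrow> f differentiable (at x)"
  by (cases n) auto

lemma smooth_iff_Dn: "smooth f \<longleftrightarrow> (\<forall>n. Dn n f)"
proof
  assume "smooth f"
  then have "\<forall>is x. iter_pd is f differentiable (at x)" unfolding smooth_def by blast
  then show "\<forall>n. Dn n f"
  proof (intro allI)
    fix n
    show "\<forall>is x. iter_pd is f differentiable (at x) \<Longrightarrow> Dn n f"
    proof (induction n arbitrary: f)
      case 0
      then show ?case using 0[rule_format, of "[]"] by simp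
    next
      case (Suc n)
      have "Dn n (pd i f)" for i
        using Suc.IH[of "pd i f"] Suc.prems[rule_format, of "_ @ [i]"] by (simp add: iter_pd_snoc)
      then show ?case using Suc.prems[rule_format, of "[]"] by simp
    qed
  qed
next
  assume H: "\<forall>n. Dn n f"
  have "\<forall>f::real^'a \<Rightarrow> real. (\<forall>n. Dn n f) \<longrightarrow> (\<forall>x. iter_pd is f differentiable (at x))" for "is" :: "'a list"
  proof (induction "is" rule: rev_induct)
    case Nil
    then show ?case by (auto intro: Dn_diff[of 0])
  next
    case (snoc i "is")
    show ?case
    proof (intro allI impI)
      fix f :: "real^'a \<Rightarrow> real" and x assume "\<forall>n. Dn n f"
      then have "\<forall>n. Dn n (pd i f)" using Dn.simps(2) by blast
      then show "iter_pd (is @ [i]) f differentiable at x"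
        using snoc.IH by (simp add: iter_pd_snoc)
    qed
  qed
  then show "smooth f" using H unfolding smooth_def by blast
qed

lemma Dn_mono: "Dn (Suc n) f \<Longrightarrow> Dn n f"
proof (induction n arbitrary: f)
  case 0 then show ?case by simp
next
  case (Suc n) then show ?case by (metis Dn.simps(2))
qed

lemma pd_add_fun:
  assumes "\<And>x. f differentiable (at x)" "\<And>x. g differentiable (at x)"
  shows "pd i (\<lambda>x. f x + g x) = (\<lambda>x. pd i f x + pd i g x)"
proof
  fix x
  have "(f has_derivative frechet_derivative f (at x)) (at x)" "(g has_derivative frechet_derivative g (at x)) (at x)"
    using assms frechet_derivative_works by blast+
  from pd_eq[OF has_derivative_add[OF this]] show "pd i (\<lambda>x. f x + g x) x = pd i f x + pd i g x"
    by (simp add: pd_def)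
qed

lemma pd_mult_fun:
  assumes "\<And>x. f differentiable (at x)" "\<And>x. g differentiable (at x)"
  shows "pd i (\<lambda>x. f x * g x) = (\<lambda>x. pd i f x * g x + f x * pd i g x)"
proof
  fix x
  have "(f has_derivative frechet_derivative f (at x)) (at x)" "(g has_derivative frechet_derivative g (at x)) (at x)"
    using assms frechet_derivative_works by blast+
  from pd_eq[OF has_derivative_mult[OF this]] show "pd i (\<lambda>x. f x * g x) x = pd i f x * g x + f x * pd i g x"
    by (simp add: pd_def algebra_simps)
qed

lemma pd_const_fun: "pd i (\<lambda>x. c) = (\<lambda>x. 0)"
proof
  fix x
  have "((\<lambda>x::real^'a. c) has_derivative (\<lambda>_. 0)) (at x)" by simp
  from pd_eq[OF this] show "pd i (\<lambda>x. c) x = 0" by simp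
qed

lemma pd_comp:
  assumes "(\<theta> has_real_derivative d) (at (f x))" "f differentiable (at x)"
  shows "pd i (\<lambda>x. \<theta> (f x)) x = d * pd i f x"
proof -
  have f: "(f has_derivative frechet_derivative f (at x)) (at x)"
    using assms frechet_derivative_works by blast
  have t: "(\<theta> has_derivative (*) d) (at (f x))"
    using assms(1) by (simp add: has_field_derivative_def)
  from pd_eq[OF diff_chain_at[OF f t, unfolded o_def]] show ?thesis
    by (simp add: pd_def)
qed

lemma pd_comp_fun:
  assumes "\<And>s. (\<theta> has_real_derivative \<theta>' s) (at s)" "\<And>x. f differentiable (at x)"
  shows "pd i (\<lambda>x. \<theta> (f x)) = (\<lambda>x. \<theta>' (f x) * pd i f x)"
  using pd_comp assms by blast

lemma pd_component: "pd i (\<lambda>x. x $ j) x = (if i = j then 1 else 0)"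
proof -
  have "((\<lambda>x::real^'a. x $ j) has_derivative (\<lambda>x. x $ j)) (at x)"
    by (rule bounded_linear_imp_has_derivative) (simp add: bounded_linear_vec_nth)
  then show ?thesis by (simp add: pd_eq axis_def)
qed

lemma Dn_const: "Dn n (\<lambda>x. c)"
  by (induction n arbitrary: c) (auto simp: pd_const_fun)

lemma Dn_component: "Dn n (\<lambda>x. x $ j)"
proof (cases n)
  case 0 then show ?thesis by (simp add: bounded_linear_imp_differentiable bounded_linear_vec_nth)
next
  case (Suc m)
  have "pd i (\<lambda>x. x $ j) = (\<lambda>x. if i = j then 1 else 0)" for i
    by (rule ext) (simp add: pd_component)
  then show ?thesis using Suc by (simp add: Dn_const bounded_linear_imp_differentiable bounded_linear_vec_nth)
qed

lemma Dn_add: "Dn n f \<Longrightarrow> Dn n g \<Longrightarrow> Dn n (\<lambda>x. f x + g x)"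
proof (induction n arbitrary: f g)
  case 0 then show ?case by auto
next
  case (Suc n)
  then show ?case by (simp add: pd_add_fun)
qed

lemma Dn_mult: "Dn n f \<Longrightarrow> Dn n g \<Longrightarrow> Dn n (\<lambda>x. f x * g x)"
proof (induction n arbitrary: f g)
  case 0 then show ?case by auto
next
  case (Suc n)
  have "Dn n (\<lambda>x. pd i f x * g x + f x * pd i g x)" for i
    using Suc by (intro Dn_add Suc.IH) (auto intro: Dn_mono)
  then show ?case using Suc.prems by (simp add: pd_mult_fun)
qed

lemma Dn_sum: "finite S \<Longrightarrow> (\<And>i. i \<in> S \<Longrightarrow> Dn n (f i)) \<Longrightarrow> Dn n (\<lambda>x. \<Sum>i\<in>S. f i x)"
proof (induction S rule: finite_induct)
  case empty then show ?case by (simp add: Dn_const)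
next
  case (insert a S)
  have "Dn n (\<lambda>x. f a x + (\<Sum>i\<in>S. f i x))"
    by (rule Dn_add) (use insert in auto)
  then show ?case using insert by simp
qed

definition dseq :: "(nat \<Rightarrow> real \<Rightarrow> real) \<Rightarrow> bool" where
  "dseq ds \<longleftrightarrow> (\<forall>m s. (ds m has_real_derivative ds (Suc m) s) (at s))"

lemma dseq_diff: "dseq ds \<Longrightarrow> f differentiable (at x) \<Longrightarrow> (\<lambda>x. ds m (f x)) differentiable (at x)"
proof -
  assume d: "dseq ds" and f: "f differentiable (at x)"
  have "ds m differentiable (at (f x))"
    using d unfolding dseq_def by (meson differentiableI has_field_derivative_imp_has_derivative)
  from differentiable_chain_at[OF f this] show ?thesis by (simp add: o_def)
qed

lemma Dn_comp: "dseq ds \<Longrightarrow> Dn n f \<Longrightarrow> Dn n (\<lambda>x. ds m (f x))"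
proof (induction n arbitrary: m f)
  case 0
  then show ?case by (simp add: dseq_diff)
next
  case (Suc n)
  have d: "\<And>x. f differentiable (at x)" using Suc by simp
  have pd: "pd i (\<lambda>x. ds m (f x)) = (\<lambda>x. ds (Suc m) (f x) * pd i f x)" for i
    by (rule pd_comp_fun) (use Suc.prems d in \<open>auto simp: dseq_def\<close>)
  have "Dn n (\<lambda>x. ds (Suc m) (f x) * pd i f x)" for i
  proof (rule Dn_mult)
    show "Dn n (\<lambda>x. ds (Suc m) (f x))" using Suc.IH Suc.prems Dn_mono by blast
    show "Dn n (pd i f)" using Suc.prems by simp
  qed
  moreover have "(\<lambda>x. ds m (f x)) differentiable (at x)" for x
    using Suc.prems d dseq_diff by blast
  ultimately show ?case by (simp add: pd)
qed

lemma Dn_inverse: "Dn n f \<Longrightarrow> (\<And>x. f x \<noteq> 0) \<Longrightarrow> Dn n (\<lambda>x. 1 / f x)"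
proof (induction n)
  case 0
  then show ?case by (simp add: differentiable_divide)
next
  case (Suc n)
  have dif: "(\<lambda>x. 1 / f x) differentiable (at x)" for x
    using Suc.prems by (simp add: differentiable_divide)
  have "pd i (\<lambda>x. 1 / f x) x = - pd i f x * (1 / f x) * (1 / f x)" for i x
  proof -
    have "((\<lambda>s. 1 / s) has_real_derivative - 1 / (f x * f x)) (at (f x))"
      using Suc.prems(2)[of x] by (auto intro!: derivative_eq_intros simp: power2_eq_square)
    from pd_comp[where f=f and x=x and i=i, OF this] Suc.prems show ?thesis by (simp add: Dn_diff)
  qed
  then have pd: "pd i (\<lambda>x. 1 / f x) = (\<lambda>x. (- pd i f x) * (1 / f x) * (1 / f x))" for i by auto
  have "Dn n (\<lambda>x. (- pd i f x) * (1 / f x) * (1 / f x))" for i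
  proof -
    have i1: "Dn n (\<lambda>x. 1 / f x)" using Suc Dn_mono by blast
    have "Dn n (\<lambda>x. (-1) * pd i f x)" using Suc.prems by (intro Dn_mult Dn_const) auto
    then have "Dn n (\<lambda>x. (- pd i f x))" by simp
    then have "Dn n (\<lambda>x. (- pd i f x) * (1 / f x))" using i1 by (rule Dn_mult)
    then show ?thesis using i1 by (rule Dn_mult)
  qed
  then show ?case using dif by (simp add: pd)
qed

lemma smooth_const: "smooth (\<lambda>x. c)" by (simp add: smooth_iff_Dn Dn_const)
lemma smooth_component: "smooth (\<lambda>x. x $ j)" by (simp add: smooth_iff_Dn Dn_component)
lemma smooth_add: "smooth f \<Longrightarrow> smooth g \<Longrightarrow> smooth (\<lambda>x. f x + g x)"
  by (simp add: smooth_iff_Dn Dn_add)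
lemma smooth_mult: "smooth f \<Longrightarrow> smooth g \<Longrightarrow> smooth (\<lambda>x. f x * g x)"
  by (simp add: smooth_iff_Dn Dn_mult)
lemma smooth_sum: "finite S \<Longrightarrow> (\<And>i. i \<in> S \<Longrightarrow> smooth (f i)) \<Longrightarrow> smooth (\<lambda>x. \<Sum>i\<in>S. f i x)"
  by (simp add: smooth_iff_Dn Dn_sum)
lemma smooth_comp: "dseq ds \<Longrightarrow> smooth f \<Longrightarrow> smooth (\<lambda>x. ds m (f x))"
  by (simp add: smooth_iff_Dn Dn_comp)
lemma smooth_inverse: "smooth f \<Longrightarrow> (\<And>x. f x \<noteq> 0) \<Longrightarrow> smooth (\<lambda>x. 1 / f x)"
  by (simp add: smooth_iff_Dn Dn_inverse)
lemma smooth_pd: "smooth f \<Longrightarrow> smooth (pd i f)"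
  by (simp add: smooth_def iter_pd_snoc[symmetric])
lemma smooth_diff: "smooth f \<Longrightarrow> f differentiable (at x)"
  by (simp add: smooth_iff_Dn Dn_diff)

lemma dseq_exp: "dseq (\<lambda>m. exp)"
  unfolding dseq_def by (auto intro: DERIV_exp)



fun Pf :: "nat \<Rightarrow> real poly" where
  "Pf 0 = 1"
| "Pf (Suc n) = [:0,0,1:] * (Pf n - pderiv (Pf n))"

definition fl :: "nat \<Rightarrow> real \<Rightarrow> real" where
  "fl n t = (if t > 0 then poly (Pf n) (1/t) * exp (-(1/t)) else 0)"

lemma poly_exp_at_top: "((\<lambda>y. poly Q y * exp (-y)) \<longlongrightarrow> (0::real)) at_top"
proof -
  have e: "poly Q y * exp (-y) = (\<Sum>i\<le>degree Q. coeff Q i * (y ^ i / exp y))" for y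
    by (simp add: poly_altdef sum_distrib_right exp_minus divide_inverse mult.assoc)
  have "((\<lambda>y. \<Sum>i\<le>degree Q. coeff Q i * (y ^ i / exp y)) \<longlongrightarrow> (\<Sum>i\<le>degree Q. coeff Q i * 0)) at_top"
    by (intro tendsto_sum tendsto_mult tendsto_const tendsto_power_div_exp_0)
  then show ?thesis by (simp add: e)
qed

lemma poly_exp_at_right: "((\<lambda>t. poly Q (1/t) * exp (-(1/t))) \<longlongrightarrow> (0::real)) (at_right 0)"
proof -
  have "((\<lambda>t. poly Q (inverse t) * exp (-(inverse t))) \<longlongrightarrow> (0::real)) (at_right 0)"
    using filterlim_compose[OF poly_exp_at_top filterlim_inverse_at_top_right] by (simp add: o_def)
  then show ?thesis by (simp add: inverse_eq_divide)
qed

lemma fl_deriv_pos: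
  assumes "t > 0"
  shows "((\<lambda>t. poly P (1/t) * exp (-(1/t))) has_real_derivative
           poly ([:0,0,1:] * (P - pderiv P)) (1/t) * exp (-(1/t))) (at t)"
proof -
  have inv: "((\<lambda>t. 1/t) has_real_derivative (-(1/t^2))) (at t)"
    using assms by (auto intro!: derivative_eq_intros simp: power2_eq_square)
  have p: "((\<lambda>t. poly P (1/t)) has_real_derivative poly (pderiv P) (1/t) * (-(1/t^2))) (at t)"
    using DERIV_chain2[OF poly_DERIV inv] .
  have e: "((\<lambda>t. exp (-(1/t))) has_real_derivative exp (-(1/t)) * (1/t^2)) (at t)"
    using DERIV_chain2[OF DERIV_exp DERIV_minus[OF inv]] by simp
  show ?thesis
    by (rule DERIV_cong[OF DERIV_mult[OF p e]]) (simp add: algebra_simps power2_eq_square)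
qed

lemma fl_deriv: "(fl n has_real_derivative fl (Suc n) t) (at t)"
proof (cases "t > 0")
  case True
  have "fl (Suc n) t = poly ([:0,0,1:] * (Pf n - pderiv (Pf n))) (1/t) * exp (-(1/t))"
    using True by (simp add: fl_def)
  then show ?thesis
    using has_field_derivative_transform_within_open[OF fl_deriv_pos[OF True, of "Pf n"], of "{0<..}" "fl n"]
    using True by (simp add: fl_def)
next
  case False
  show ?thesis
  proof (cases "t < 0")
    case True
    have "((\<lambda>x. 0) has_real_derivative 0) (at t)" by simp
    from has_field_derivative_transform_within_open[OF this, of "{..<0}" "fl n"]
    show ?thesis using True by (simp add: fl_def)
  next
    case False
    with \<open>\<not> t > 0\<close> have t0: "t = 0" by simp
    have "((\<lambda>h. (fl n (0 + h) - fl n 0) / h) \<longlongrightarrow> 0) (at 0)"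
    proof (subst filterlim_at_split, rule conjI)
      show "((\<lambda>h. (fl n (0 + h) - fl n 0) / h) \<longlongrightarrow> 0) (at_left 0)"
      proof (rule Lim_transform_eventually[OF tendsto_const])
        show "\<forall>\<^sub>F x in at_left 0. 0 = (fl n (0 + x) - fl n 0) / x"
          by (simp add: eventually_at_left_field fl_def) (auto intro: exI[of _ "-1"])
      qed
      show "((\<lambda>h. (fl n (0 + h) - fl n 0) / h) \<longlongrightarrow> 0) (at_right 0)"
      proof (rule Lim_transform_eventually[OF poly_exp_at_right[of "[:0,1:] * Pf n"]])
        show "\<forall>\<^sub>F x in at_right 0. poly ([:0, 1:] * Pf n) (1 / x) * exp (- (1 / x)) = (fl n (0 + x) - fl n 0) / x"
          by (simp add: eventually_at_right_field fl_def) (auto intro!: exI[of _ 1] simp: field_simps)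
      qed
    qed
    then show ?thesis using t0 by (simp add: DERIV_def fl_def)
  qed
qed

lemma dseq_fl: "dseq fl"
  unfolding dseq_def using fl_deriv by blast

lemma fl0_pos: "fl 0 t > 0 \<longleftrightarrow> t > 0"
  by (simp add: fl_def)

lemma fl0_nonneg: "fl 0 t \<ge> 0"
  by (simp add: fl_def)

lemma sq_le_exp: "(y::real) \<ge> 0 \<Longrightarrow> y^2 \<le> 4 * exp y"
proof -
  assume y: "y \<ge> 0"
  have "y/2 \<le> exp (y/2)" using exp_ge_add_one_self[of "y/2"] by linarith
  then have "(y/2)^2 \<le> (exp (y/2))^2" using y by (intro power_mono) auto
  also have "(exp (y/2))^2 = exp y" by (simp add: power2_eq_square exp_add[symmetric])
  finally show ?thesis by (simp add: power2_eq_square)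
qed

lemma fl1_eq: "fl (Suc 0) t = (if t > 0 then (1/t)^2 * exp (-(1/t)) else 0)"
  by (simp add: fl_def power2_eq_square)

lemma fl1_bounds: "0 \<le> fl (Suc 0) t \<and> fl (Suc 0) t \<le> 4"
proof (cases "t > 0")
  case True
  have "(1/t)^2 \<le> 4 * exp (1/t)" using True by (intro sq_le_exp) simp
  then have "(1/t)^2 * exp (-(1/t)) \<le> 4 * exp (1/t) * exp (-(1/t))"
    by (intro mult_right_mono) auto
  also have "\<dots> = 4" by (simp add: exp_minus)
  finally show ?thesis using True by (simp add: fl1_eq)
qed (simp add: fl1_eq)

lemma fl0_le1: "fl 0 t \<le> 1"
  by (simp add: fl_def)



lemma linear_expand:
  fixes L :: "real^'n::finite \<Rightarrow> real"
  assumes "linear L"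
  shows "L w = (\<Sum>i\<in>UNIV. w $ i * L (axis i 1))"
proof -
  have "L w = L (\<Sum>i\<in>UNIV. w $ i *\<^sub>R axis i 1)"
    using basis_expansion[of w] by (simp add: scalar_mult_eq_scaleR)
  also have "\<dots> = (\<Sum>i\<in>UNIV. L (w $ i *\<^sub>R axis i 1))"
    by (rule linear_sum[OF assms])
  also have "\<dots> = (\<Sum>i\<in>UNIV. w $ i * L (axis i 1))"
    by (rule sum.cong) (simp_all add: linear_scale[OF assms])
  finally show ?thesis .
qed

lemma frechet_grad:
  fixes f :: "real^'n::finite \<Rightarrow> real"
  assumes "f differentiable (at x)"
  shows "frechet_derivative f (at x) w = grad f x \<bullet> w"
proof -
  have "linear (frechet_derivative f (at x))"
    using assms frechet_derivative_works has_derivative_linear by blast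
  then have "frechet_derivative f (at x) w = (\<Sum>i\<in>UNIV. w $ i * pd i f x)"
    unfolding pd_def by (rule linear_expand)
  also have "\<dots> = grad f x \<bullet> w"
    unfolding grad_def inner_vec_def by (rule sum.cong) auto
  finally show ?thesis .
qed

lemma grad_mult:
  assumes "\<And>x. f differentiable (at x)" "\<And>x. g differentiable (at x)"
  shows "grad (\<lambda>x. f x * g x) x = f x *\<^sub>R grad g x + g x *\<^sub>R grad f x"
  using assms by (simp add: grad_def pd_mult_fun vec_eq_iff algebra_simps)

lemma grad_comp:
  assumes "(\<theta> has_real_derivative d) (at (f x))" "f differentiable (at x)"
  shows "grad (\<lambda>x. \<theta> (f x)) x = d *\<^sub>R grad f x"
  using pd_comp[OF assms] by (simp add: grad_def vec_eq_iff)

lemma smooth_cont: "smooth f \<Longrightarrow> continuous_on UNIV f"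
  by (meson continuous_at_imp_continuous_on differentiable_imp_continuous_within smooth_diff)

lemma smooth_grad_cont: "smooth f \<Longrightarrow> continuous_on UNIV (grad f)"
  unfolding grad_def by (intro continuous_on_vec_lambda smooth_cont smooth_pd)

lemma pd_outside:
  assumes "x \<notin> closure {x. f x \<noteq> 0}"
  shows "pd i f x = 0"
proof -
  let ?S = "- closure {x. f x \<noteq> 0}"
  have "((\<lambda>x. 0) has_derivative (\<lambda>_. 0)) (at x)" by simp
  moreover have "open ?S" by auto
  moreover have "x \<in> ?S" using assms by simp
  moreover have "\<And>y. y \<in> ?S \<Longrightarrow> 0 = f y"
  proof -
    fix y assume "y \<in> ?S"
    then have "y \<notin> {x. f x \<noteq> 0}" using closure_subset[of "{x. f x \<noteq> 0}"] by (auto simp del: mem_Collect_eq)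
    then show "0 = f y" by simp
  qed
  ultimately have "(f has_derivative (\<lambda>_. 0)) (at x)"
    by (rule has_derivative_transform_within_open)
  then show ?thesis by (simp add: pd_eq)
qed

lemma grad_outside:
  "x \<notin> closure {x. f x \<noteq> 0} \<Longrightarrow> grad f x = 0"
  by (simp add: grad_def pd_outside vec_eq_iff)

lemma fun_outside:
  "x \<notin> closure {x. f x \<noteq> 0} \<Longrightarrow> f x = 0"
  using closure_subset[of "{x. f x \<noteq> 0}"] by (auto simp del: mem_Collect_eq)

lemma compact_closed_sub: "compact S \<Longrightarrow> closed T \<Longrightarrow> T \<subseteq> S \<Longrightarrow> compact T"
  using closed_Int_compact[of T S] by (simp add: Int_absorb2)

lemma bounded_supp:
  fixes f :: "real^'n::finite \<Rightarrow> 'b::real_normed_vector"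
  assumes "continuous_on UNIV f" "compact K" "\<And>x. x \<notin> K \<Longrightarrow> f x = 0"
  shows "\<exists>B. \<forall>x. norm (f x) \<le> B"
proof -
  have "compact (f ` K)" using assms by (meson compact_continuous_image continuous_on_subset subset_UNIV)
  then obtain B where B: "\<forall>y\<in>f ` K. norm y \<le> B" by (meson bounded_iff compact_imp_bounded)
  have "norm (f x) \<le> max B 0" for x
  proof (cases "x \<in> K")
    case True then show ?thesis using B by force
  next
    case False then show ?thesis using assms(3) by simp
  qed
  then show ?thesis by blast
qed

lemma test_fun_bounded:
  assumes "test_fun \<Omega> \<phi>"
  shows "\<exists>B. \<forall>x. \<bar>\<phi> x\<bar> \<le> B"
proof -
  have "continuous_on UNIV \<phi>" "compact (closure {x. \<phi> x \<noteq> 0})"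
    using assms smooth_cont unfolding test_fun_def by blast+
  from bounded_supp[OF this fun_outside[where f=\<phi>]] show ?thesis by simp
qed

lemma test_fun_grad_bounded:
  assumes "test_fun \<Omega> \<phi>"
  shows "\<exists>B. \<forall>x. norm (grad \<phi> x) \<le> B"
proof -
  have "continuous_on UNIV (grad \<phi>)" "compact (closure {x. \<phi> x \<noteq> 0})"
    using assms smooth_grad_cont unfolding test_fun_def by blast+
  from bounded_supp[OF this grad_outside[where f=\<phi>]] show ?thesis by simp
qed

lemma test_fun_sub:
  assumes "test_fun \<Omega> v" "smooth w" "{x. w x \<noteq> 0} \<subseteq> {x. v x \<noteq> 0}"
  shows "test_fun \<Omega> w"
proof -
  have sub: "closure {x. w x \<noteq> 0} \<subseteq> closure {x. v x \<noteq> 0}"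
    by (rule closure_mono) (use assms in auto)
  have "compact (closure {x. w x \<noteq> 0})"
    by (rule compact_closed_sub[OF _ _ sub]) (use assms in \<open>auto simp: test_fun_def\<close>)
  then show ?thesis using assms sub unfolding test_fun_def by blast
qed

lemma test_fun_mult_left:
  assumes "test_fun \<Omega> v" "smooth w"
  shows "test_fun \<Omega> (\<lambda>x. v x * w x)"
proof (rule test_fun_sub[OF assms(1)])
  show "smooth (\<lambda>x. v x * w x)" using assms smooth_mult unfolding test_fun_def by blast
qed auto

definition theta :: "real \<Rightarrow> real" where
  "theta s = - fl 0 (- s)"

lemma theta_deriv: "(theta has_real_derivative fl (Suc 0) (- s)) (at s)"
proof -
  have "((\<lambda>s. - fl 0 (- s)) has_real_derivative - (fl (Suc 0) (- s) * (-1))) (at s)"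
    by (intro DERIV_minus DERIV_chain2[OF fl_deriv] derivative_eq_intros) auto
  then show ?thesis by (simp add: theta_def[abs_def])
qed

lemma smooth_theta: "smooth f \<Longrightarrow> smooth (\<lambda>x. theta (f x))"
proof -
  assume f: "smooth f"
  have "smooth (\<lambda>x. (-1) * fl 0 ((-1) * f x))"
    by (intro smooth_mult smooth_const smooth_comp[OF dseq_fl] f)
  then show ?thesis by (simp add: theta_def)
qed

lemma test_fun_theta:
  assumes "test_fun \<Omega> \<psi>"
  shows "test_fun \<Omega> (\<lambda>x. theta (\<psi> x))"
proof (rule test_fun_sub[OF assms])
  show "smooth (\<lambda>x. theta (\<psi> x))" using assms smooth_theta unfolding test_fun_def by blast
qed (auto simp: theta_def fl_def)

lemma theta_nonpos: "theta s \<le> 0"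
  using fl0_nonneg by (simp add: theta_def)

lemma theta_neg_iff: "theta s < 0 \<longleftrightarrow> s < 0"
  by (simp add: theta_def fl_def)

lemma theta_cont: "continuous_on UNIV theta"
  using theta_deriv by (meson DERIV_continuous continuous_at_imp_continuous_on)



locale Fnorm =
  fixes F :: "real^'n::finite \<Rightarrow> real"
  assumes conv: "convex_on UNIV F"
    and hom: "\<And>t \<xi>. F (t *\<^sub>R \<xi>) = \<bar>t\<bar> * F \<xi>"
begin

lemma F0: "F 0 = 0"
  using hom[of 0 0] by simp

lemma Fneg: "F (- x) = F x"
  using hom[of "-1" x] by simp

lemma Fsubadd: "F (x + y) \<le> F x + F y"
proof -
  have "F ((1 - 1/2) *\<^sub>R x + (1/2) *\<^sub>R y) \<le> (1 - 1/2) * F x + (1/2) * F y"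
    by (rule convex_onD[OF conv]) auto
  moreover have "F (x + y) = 2 * F ((1 - 1/2) *\<^sub>R x + (1/2) *\<^sub>R y)"
    using hom[of 2 "(1 - 1/2) *\<^sub>R x + (1/2) *\<^sub>R y"] by (simp add: scaleR_add_right)
  ultimately show ?thesis by simp
qed

lemma Fdiff_le: "F x - F y \<le> F (x - y)"
  using Fsubadd[of "x - y" y] by simp

lemma F_line_deriv:
  assumes "F differentiable (at \<xi>)"
  shows "((\<lambda>t. F (\<xi> + t *\<^sub>R w)) has_real_derivative frechet_derivative F (at \<xi>) w) (at 0)"
proof -
  let ?L = "frechet_derivative F (at \<xi>)"
  have L: "(F has_derivative ?L) (at \<xi>)" using assms frechet_derivative_works by blast
  have lin: "linear ?L" using has_derivative_linear[OF L] .
  have l: "((\<lambda>t::real. \<xi> + t *\<^sub>R w) has_derivative (\<lambda>t. t *\<^sub>R w)) (at 0)"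
    by (auto intro!: derivative_eq_intros)
  have L': "(F has_derivative ?L) (at ((\<lambda>t::real. \<xi> + t *\<^sub>R w) 0))" using L by simp
  have "((\<lambda>t. F (\<xi> + t *\<^sub>R w)) has_derivative (\<lambda>t. ?L (t *\<^sub>R w))) (at 0)"
    using diff_chain_at[OF l L'] by (simp add: o_def)
  moreover have "(\<lambda>t. ?L (t *\<^sub>R w)) = (*) (?L w)"
    using linear_scale[OF lin] by (auto simp: mult.commute)
  ultimately show ?thesis unfolding has_field_derivative_def by simp
qed

lemma DF_le:
  assumes "F differentiable (at \<xi>)"
  shows "frechet_derivative F (at \<xi>) w \<le> F w"
proof -
  let ?\<phi> = "\<lambda>t. F (\<xi> + t *\<^sub>R w)"
  have "((\<lambda>h. (?\<phi> (0 + h) - ?\<phi> 0) / h) \<longlongrightarrow> frechet_derivative F (at \<xi>) w) (at 0)"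
    using F_line_deriv[OF assms, of w] by (simp add: DERIV_def)
  then have lim: "((\<lambda>h. (?\<phi> (0 + h) - ?\<phi> 0) / h) \<longlongrightarrow> frechet_derivative F (at \<xi>) w) (at_right 0)"
    by (simp add: filterlim_at_split)
  have "\<forall>\<^sub>F h in at_right 0. (?\<phi> (0 + h) - ?\<phi> 0) / h \<le> F w"
  proof -
    have "(?\<phi> (0 + h) - ?\<phi> 0) / h \<le> F w" if "h > 0" for h
    proof -
      have "?\<phi> h \<le> F \<xi> + F (h *\<^sub>R w)" by (rule Fsubadd)
      also have "\<dots> = F \<xi> + h * F w" using hom[of h w] that by simp
      finally show ?thesis using that by (simp add: divide_le_eq mult.commute)
    qed
    then show ?thesis by (simp add: eventually_at_right_field) (auto intro!: exI[of _ 1])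
  qed
  from tendsto_upperbound[OF lim this] show ?thesis by simp
qed

lemma DF_abs:
  assumes "F differentiable (at \<xi>)"
  shows "\<bar>frechet_derivative F (at \<xi>) w\<bar> \<le> F w"
proof -
  have lin: "linear (frechet_derivative F (at \<xi>))"
    using assms frechet_derivative_works has_derivative_linear by blast
  have "frechet_derivative F (at \<xi>) (- w) \<le> F (- w)" by (rule DF_le[OF assms])
  then have "- frechet_derivative F (at \<xi>) w \<le> F w" by (simp add: linear_neg[OF lin] Fneg)
  moreover have "frechet_derivative F (at \<xi>) w \<le> F w" by (rule DF_le[OF assms])
  ultimately show ?thesis by simp
qed

lemma DF_euler:
  assumes "F differentiable (at \<xi>)"
  shows "frechet_derivative F (at \<xi>) \<xi> = F \<xi>"
proof -
  have d1: "((\<lambda>t. F (\<xi> + t *\<^sub>R \<xi>)) has_real_derivative frechet_derivative F (at \<xi>) \<xi>) (at 0)"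
    by (rule F_line_deriv[OF assms])
  have d0: "((\<lambda>t. (1 + t) * F \<xi>) has_real_derivative F \<xi>) (at 0)"
    by (auto intro!: derivative_eq_intros)
  have eq:  "\<And>t. t \<in> {-1<..} \<Longrightarrow> (1 + t) * F \<xi> = F (\<xi> + t *\<^sub>R \<xi>)"
  proof -
    fix t :: real assume "t \<in> {-1<..}"
    then have "\<bar>1 + t\<bar> = 1 + t" by simp
    moreover have "\<xi> + t *\<^sub>R \<xi> = (1 + t) *\<^sub>R \<xi>" by (simp add: algebra_simps)
    ultimately show "(1 + t) * F \<xi> = F (\<xi> + t *\<^sub>R \<xi>)" using hom[of "1 + t" \<xi>] by simp
  qed
  have d2: "((\<lambda>t. F (\<xi> + t *\<^sub>R \<xi>)) has_real_derivative F \<xi>) (at 0)"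
    by (rule has_field_derivative_transform_within_open[OF d0, of "{-1<..}"]) (use eq in auto)
  from DERIV_unique[OF d1 d2] show ?thesis .
qed

end



lemma young_abs: "\<bar>x * y\<bar> \<le> (x^2 / t + t * y^2) / 2" if "t > 0" for x y t :: real
proof -
  have "0 \<le> (\<bar>x\<bar> - t * \<bar>y\<bar>)^2" by simp
  then have h: "2 * t * (\<bar>x\<bar> * \<bar>y\<bar>) \<le> x^2 + t^2 * y^2"
    by (simp add: power2_eq_square algebra_simps)
  have "\<bar>x * y\<bar> = (2 * t * (\<bar>x\<bar> * \<bar>y\<bar>)) / (2 * t)" using that by (simp add: abs_mult)
  also have "\<dots> \<le> (x^2 + t^2 * y^2) / (2 * t)"
    using h that by (intro divide_right_mono) auto
  also have "\<dots> = (x^2 / t + t * y^2) / 2" using that by (simp add: field_simps power2_eq_square)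
  finally show ?thesis .
qed

lemma L2_prod_integrable:
  fixes f g :: "'a \<Rightarrow> real"
  assumes [measurable]: "f \<in> borel_measurable M" "g \<in> borel_measurable M"
    and "integrable M (\<lambda>x. (f x)^2)" "integrable M (\<lambda>x. (g x)^2)"
  shows "integrable M (\<lambda>x. f x * g x)"
proof (rule Bochner_Integration.integrable_bound[where f="\<lambda>x. ((f x)^2 + (g x)^2) / 2"])
  show "integrable M (\<lambda>x. ((f x)^2 + (g x)^2) / 2)" using assms by auto
  show "AE x in M. norm (f x * g x) \<le> norm (((f x)^2 + (g x)^2) / 2)"
    using young_abs[of 1] by simp
qed simp

lemma L2_abs_prod_integrable:
  fixes f g :: "'a \<Rightarrow> real"
  assumes [measurable]: "f \<in> borel_measurable M" "g \<in> borel_measurable M"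
    and "integrable M (\<lambda>x. (f x)^2)" "integrable M (\<lambda>x. (g x)^2)"
  shows "integrable M (\<lambda>x. \<bar>f x\<bar> * \<bar>g x\<bar>)"
  using L2_prod_integrable[OF assms] integrable_abs by (simp add: abs_mult[symmetric])

lemma L2_prod_tendsto:
  fixes f :: "nat \<Rightarrow> 'a \<Rightarrow> real" and g :: "'a \<Rightarrow> real"
  assumes [measurable]: "\<And>k. f k \<in> borel_measurable M" "g \<in> borel_measurable M"
    and fi: "\<And>k. integrable M (\<lambda>x. (f k x)^2)" and gi: "integrable M (\<lambda>x. (g x)^2)"
    and lim: "(\<lambda>k. \<integral>x. (f k x)^2 \<partial>M) \<longlonglongrightarrow> 0"
  shows "(\<lambda>k. \<integral>x. \<bar>f k x\<bar> * \<bar>g x\<bar> \<partial>M) \<longlonglongrightarrow> 0"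
proof (rule LIMSEQ_I)
  fix r :: real assume r: "r > 0"
  define G where "G = (\<integral>x. (g x)^2 \<partial>M)"
  have G0: "G \<ge> 0" unfolding G_def by simp
  define t where "t = r / (G + 1)"
  have t0: "t > 0" using r G0 by (simp add: t_def)
  have tG: "t * G < r"
  proof -
    have "t * G < t * (G + 1)" using t0 by simp
    also have "\<dots> = r" using G0 by (simp add: t_def)
    finally show ?thesis .
  qed
  obtain N where N: "\<And>k. k \<ge> N \<Longrightarrow> norm ((\<integral>x. (f k x)^2 \<partial>M) - 0) < t * r"
    using LIMSEQ_D[OF lim, of "t * r"] t0 r by auto
  have "norm ((\<integral>x. \<bar>f k x\<bar> * \<bar>g x\<bar> \<partial>M) - 0) < r" if k: "k \<ge> N" for k
  proof -
    have i1: "integrable M (\<lambda>x. \<bar>f k x\<bar> * \<bar>g x\<bar>)"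
      by (rule L2_abs_prod_integrable) (use fi gi in auto)
    have i2: "integrable M (\<lambda>x. ((f k x)^2 / t + t * (g x)^2) / 2)"
      using fi gi by auto
    have "(\<integral>x. \<bar>f k x\<bar> * \<bar>g x\<bar> \<partial>M) \<le> (\<integral>x. ((f k x)^2 / t + t * (g x)^2) / 2 \<partial>M)"
      by (rule integral_mono[OF i1 i2]) (use young_abs[OF t0] in \<open>simp add: abs_mult\<close>)
    also have "\<dots> = ((\<integral>x. (f k x)^2 \<partial>M) / t + t * G) / 2"
      using fi gi by (simp add: G_def)
    also have "\<dots> < (r + r) / 2"
    proof -
      have "(\<integral>x. (f k x)^2 \<partial>M) < t * r" using N[OF k] by simp
      then have "(\<integral>x. (f k x)^2 \<partial>M) / t < r" using t0 by (simp add: divide_less_eq mult.commute)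
      then show ?thesis using tG by simp
    qed
    finally have "(\<integral>x. \<bar>f k x\<bar> * \<bar>g x\<bar> \<partial>M) < r" by simp
    moreover have "(\<integral>x. \<bar>f k x\<bar> * \<bar>g x\<bar> \<partial>M) \<ge> 0" by simp
    ultimately show ?thesis by simp
  qed
  then show "\<exists>no. \<forall>k\<ge>no. norm ((\<integral>x. \<bar>f k x\<bar> * \<bar>g x\<bar> \<partial>M) - 0) < r" by blast
qed

lemma L2_sq_tendsto:
  fixes a :: "nat \<Rightarrow> 'a \<Rightarrow> real" and b :: "'a \<Rightarrow> real"
  assumes [measurable]: "\<And>k. a k \<in> borel_measurable M" "b \<in> borel_measurable M"
    and ai: "\<And>k. integrable M (\<lambda>x. (a k x)^2)" and bi: "integrable M (\<lambda>x. (b x)^2)"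
    and lim: "(\<lambda>k. \<integral>x. (a k x - b x)^2 \<partial>M) \<longlonglongrightarrow> 0"
  shows "(\<lambda>k. \<integral>x. (a k x)^2 \<partial>M) \<longlonglongrightarrow> (\<integral>x. (b x)^2 \<partial>M)"
proof -
  have di: "integrable M (\<lambda>x. (a k x - b x)^2)" for k
  proof -
    have "integrable M (\<lambda>x. (a k x)^2 - 2 * (a k x * b x) + (b x)^2)"
      using ai bi L2_prod_integrable[of "a k" M b] by auto
    moreover have "(\<lambda>x. (a k x - b x)^2) = (\<lambda>x. (a k x)^2 - 2 * (a k x * b x) + (b x)^2)"
      by (rule ext) (simp add: power2_eq_square algebra_simps)
    ultimately show ?thesis by simp
  qed
  have T: "(\<lambda>k. \<integral>x. \<bar>a k x - b x\<bar> * \<bar>b x\<bar> \<partial>M) \<longlonglongrightarrow> 0"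
    by (rule L2_prod_tendsto[where f="\<lambda>k x. a k x - b x"]) (use di bi lim in auto)
  have eq: "(\<integral>x. (a k x)^2 \<partial>M) = (\<integral>x. (b x)^2 \<partial>M) + ((\<integral>x. (a k x - b x)^2 \<partial>M) + 2 * (\<integral>x. (a k x - b x) * b x \<partial>M))" for k
  proof -
    have i3: "integrable M (\<lambda>x. (a k x - b x) * b x)"
      by (rule L2_prod_integrable) (use di bi in auto)
    have "(\<integral>x. (a k x)^2 \<partial>M) = (\<integral>x. (b x)^2 + ((a k x - b x)^2 + 2 * ((a k x - b x) * b x)) \<partial>M)"
      by (rule Bochner_Integration.integral_cong) (auto simp: power2_eq_square algebra_simps)
    also have "\<dots> = (\<integral>x. (b x)^2 \<partial>M) + ((\<integral>x. (a k x - b x)^2 \<partial>M) + 2 * (\<integral>x. (a k x - b x) * b x \<partial>M))"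
      using i3 di bi by simp
    finally show ?thesis .
  qed
  have T2: "(\<lambda>k. \<integral>x. (a k x - b x) * b x \<partial>M) \<longlonglongrightarrow> 0"
  proof (rule Lim_null_comparison[OF _ T])
    show "\<forall>\<^sub>F k in sequentially. norm (\<integral>x. (a k x - b x) * b x \<partial>M) \<le> (\<integral>x. \<bar>a k x - b x\<bar> * \<bar>b x\<bar> \<partial>M)"
      using integral_norm_bound[of M "\<lambda>x. (a _ x - b x) * b x"] by (simp add: abs_mult)
  qed
  have "(\<lambda>k. (\<integral>x. (b x)^2 \<partial>M) + ((\<integral>x. (a k x - b x)^2 \<partial>M) + 2 * (\<integral>x. (a k x - b x) * b x \<partial>M)))
      \<longlonglongrightarrow> (\<integral>x. (b x)^2 \<partial>M) + (0 + 2 * 0)"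
    by (intro tendsto_intros lim T2)
  then show ?thesis by (simp add: eq)
qed

lemma L2_AE_subseq:
  fixes a :: "nat \<Rightarrow> 'a \<Rightarrow> real" and b :: "'a \<Rightarrow> real"
  assumes "\<And>k. integrable M (\<lambda>x. (a k x - b x)^2)"
    and lim: "(\<lambda>k. \<integral>x. (a k x - b x)^2 \<partial>M) \<longlonglongrightarrow> 0"
  shows "\<exists>r. strict_mono r \<and> (AE x in M. (\<lambda>n. a (r n) x) \<longlonglongrightarrow> b x)"
proof -
  obtain r where r: "strict_mono r" "AE x in M. (\<lambda>n. (a (r n) x - b x)^2) \<longlonglongrightarrow> 0"
    using tendsto_L1_AE_subseq[of M "\<lambda>k x. (a k x - b x)^2"] assms by auto
  have "(\<lambda>n. a (r n) x) \<longlonglongrightarrow> b x" if "(\<lambda>n. (a (r n) x - b x)^2) \<longlonglongrightarrow> 0" for x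
  proof -
    have "(\<lambda>n. sqrt ((a (r n) x - b x)^2)) \<longlonglongrightarrow> sqrt 0"
      using tendsto_real_sqrt[OF that] .
    then have "(\<lambda>n. \<bar>a (r n) x - b x\<bar>) \<longlonglongrightarrow> 0" by simp
    then have "(\<lambda>n. a (r n) x - b x) \<longlonglongrightarrow> 0" by (simp add: tendsto_rabs_zero_iff)
    then show ?thesis by (simp add: LIM_zero_iff)
  qed
  then show ?thesis using r by (auto elim!: AE_mp)
qed



lemma measurable_chi:
  fixes f :: "'n::finite \<Rightarrow> 'a \<Rightarrow> real"
  assumes "\<And>i. f i \<in> borel_measurable M"
  shows "(\<lambda>x. \<chi> i. f i x) \<in> borel_measurable M"
proof (subst borel_measurable_euclidean_space, intro ballI)
  fix b :: "real^'n" assume "b \<in> Basis"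
  then obtain i where b: "b = axis i 1" by (auto simp: Basis_vec_def)
  show "(\<lambda>x. (\<chi> i. f i x) \<bullet> b) \<in> borel_measurable M"
    using assms[of i] by (simp add: b inner_axis)
qed

locale wsol = Fnorm F for F :: "real^'n::finite \<Rightarrow> real" +
  fixes \<Omega> :: "(real^'n) set" and lam :: real and u :: "real^'n \<Rightarrow> real"
    and g :: "real^'n \<Rightarrow> real^'n" and \<psi> :: "nat \<Rightarrow> real^'n \<Rightarrow> real" and bF :: real
  assumes Fnonneg: "\<And>\<xi>. F \<xi> \<ge> 0"
    and Fbound: "\<And>\<xi>. F \<xi> \<le> bF * norm \<xi>"
    and bF_pos: "bF > 0"
    and Fdiff: "\<And>\<xi>. \<xi> \<noteq> 0 \<Longrightarrow> F differentiable (at \<xi>)"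
    and Fmeas[measurable]: "F \<in> borel_measurable borel"
    and pdF_meas[measurable]: "\<And>i. pd i F \<in> borel_measurable borel"
    and \<Omega>open: "open \<Omega>" and \<Omega>bdd: "bounded \<Omega>"
    and lam_pos: "lam > 0"
    and u_meas[measurable]: "u \<in> borel_measurable (lebesgue_on \<Omega>)"
    and u_sq: "integrable (lebesgue_on \<Omega>) (\<lambda>x. (u x)^2)"
    and g_meas[measurable]: "g \<in> borel_measurable (lebesgue_on \<Omega>)"
    and g_sq: "integrable (lebesgue_on \<Omega>) (\<lambda>x. (norm (g x))^2)"
    and \<psi>_test: "\<And>k. test_fun \<Omega> (\<psi> k)"
    and \<psi>_lim: "(\<lambda>k. \<integral>x. (\<psi> k x - u x)^2 \<partial>lebesgue_on \<Omega>) \<longlonglongrightarrow> 0"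
    and \<psi>_glim: "(\<lambda>k. \<integral>x. (norm (grad (\<psi> k) x - g x))^2 \<partial>lebesgue_on \<Omega>) \<longlonglongrightarrow> 0"
    and eloc: "\<And>K. compact K \<Longrightarrow> K \<subseteq> \<Omega> \<Longrightarrow> set_integrable lebesgue K (\<lambda>x. exp (u x))"
    and weq: "\<And>\<phi>. test_fun \<Omega> \<phi> \<Longrightarrow>
      (\<integral>x. F (g x) * frechet_derivative F (at (g x)) (grad \<phi> x) \<partial>lebesgue_on \<Omega>)
        = lam * (\<integral>x. exp (u x) * \<phi> x \<partial>lebesgue_on \<Omega>)"
begin

abbreviation "M \<equiv> lebesgue_on \<Omega>"

lemma \<Omega>_sets: "\<Omega> \<in> sets lebesgue"
  using lmeasurable_open[OF \<Omega>bdd \<Omega>open] by auto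

lemma fin: "finite_measure M"
proof -
  have "emeasure lebesgue \<Omega> \<noteq> top" using lmeasurable_open[OF \<Omega>bdd \<Omega>open] fmeasurableD2 by blast
  then show ?thesis
    by (intro finite_measureI) (simp add: emeasure_restrict_space \<Omega>_sets space_restrict_space)
qed

lemma meas_cont: "continuous_on UNIV f \<Longrightarrow> f \<in> borel_measurable M"
  by (rule continuous_imp_measurable_on_sets_lebesgue[OF continuous_on_subset \<Omega>_sets]) auto

lemma test_meas: "test_fun \<Omega> v \<Longrightarrow> v \<in> borel_measurable M"
  by (rule meas_cont) (auto simp: test_fun_def smooth_cont)

lemma test_grad_meas: "test_fun \<Omega> v \<Longrightarrow> grad v \<in> borel_measurable M"
  by (rule meas_cont) (auto simp: test_fun_def smooth_grad_cont)

lemma \<psi>_meas[measurable]: "\<psi> k \<in> borel_measurable M"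
  using test_meas[OF \<psi>_test] .

lemma \<psi>_grad_meas[measurable]: "grad (\<psi> k) \<in> borel_measurable M"
  using test_grad_meas[OF \<psi>_test] .

lemma theta_meas[measurable]: "theta \<in> borel_measurable borel"
  using borel_measurable_continuous_onI[OF theta_cont] .

lemma fl1_meas[measurable]: "fl (Suc 0) \<in> borel_measurable borel"
proof -
  have "continuous_on UNIV (fl (Suc 0))"
    using fl_deriv by (meson DERIV_continuous continuous_at_imp_continuous_on)
  then show ?thesis using borel_measurable_continuous_onI by blast
qed

lemma const_int: "integrable M (\<lambda>x. c::real)"
  using finite_measure.integrable_const[OF fin] .

lemma norm_g_int: "integrable M (\<lambda>x. norm (g x))"
proof (rule Bochner_Integration.integrable_bound[where f="\<lambda>x. (1 + (norm (g x))^2) / 2"])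
  show "integrable M (\<lambda>x. (1 + (norm (g x))^2) / 2)" using g_sq const_int by auto
  show "AE x in M. norm (norm (g x)) \<le> norm ((1 + (norm (g x))^2) / 2)"
    using young_abs[of 1 1 "norm (g _)"] by (auto simp: power2_eq_square)
qed simp

definition A :: "real^'n \<Rightarrow> real^'n" where
  "A x = F (g x) *\<^sub>R (\<chi> i. pd i F (g x))"

lemma A_meas[measurable]: "A \<in> borel_measurable M"
  unfolding A_def by (intro borel_measurable_scaleR measurable_chi) measurable

lemma A_eq: "F (g x) * frechet_derivative F (at (g x)) w = A x \<bullet> w"
proof (cases "g x = 0")
  case True then show ?thesis by (simp add: A_def F0)
next
  case False
  have "frechet_derivative F (at (g x)) w = grad F (g x) \<bullet> w"
    by (rule frechet_grad[OF Fdiff[OF False]])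
  then show ?thesis by (simp add: A_def grad_def)
qed

lemma A_bound: "\<bar>A x \<bullet> w\<bar> \<le> F (g x) * F w"
proof (cases "g x = 0")
  case True then show ?thesis by (simp add: A_def F0 Fnonneg)
next
  case False
  have "\<bar>frechet_derivative F (at (g x)) w\<bar> \<le> F w" by (rule DF_abs[OF Fdiff[OF False]])
  then have "\<bar>F (g x) * frechet_derivative F (at (g x)) w\<bar> \<le> F (g x) * F w"
    using Fnonneg[of "g x"] by (simp add: abs_mult mult_left_mono)
  then show ?thesis by (simp add: A_eq)
qed

lemma A_g: "A x \<bullet> g x = (F (g x))^2"
proof (cases "g x = 0")
  case True then show ?thesis by (simp add: A_def F0)
next
  case False
  have "frechet_derivative F (at (g x)) (g x) = F (g x)" by (rule DF_euler[OF Fdiff[OF False]])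
  then show ?thesis using A_eq[of x "g x"] by (simp add: power2_eq_square)
qed

lemma A_bound2: "\<bar>A x \<bullet> w\<bar> \<le> bF^2 * norm (g x) * norm w"
proof -
  have "F (g x) * F w \<le> (bF * norm (g x)) * (bF * norm w)"
    by (intro mult_mono Fbound) (use Fnonneg bF_pos in auto)
  then show ?thesis using A_bound[of x w] by (simp add: power2_eq_square algebra_simps)
qed

lemma A_norm: "norm (A x) \<le> bF^2 * norm (g x)"
proof (cases "A x = 0")
  case True then show ?thesis using bF_pos by simp
next
  case False
  have "(norm (A x))^2 = \<bar>A x \<bullet> A x\<bar>" by (simp add: power2_norm_eq_inner)
  also have "\<dots> \<le> bF^2 * norm (g x) * norm (A x)" by (rule A_bound2)
  finally have "norm (A x) * norm (A x) \<le> (bF^2 * norm (g x)) * norm (A x)"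
    by (simp add: power2_eq_square)
  then show ?thesis using False by simp
qed

lemma weq': "test_fun \<Omega> \<phi> \<Longrightarrow> (\<integral>x. A x \<bullet> grad \<phi> x \<partial>M) = lam * (\<integral>x. exp (u x) * \<phi> x \<partial>M)"
  using weq[of \<phi>] by (simp add: A_eq)

lemma exp_int:
  assumes v: "test_fun \<Omega> v" and w[measurable]: "w \<in> borel_measurable M"
    and B: "\<And>x. \<bar>w x\<bar> \<le> B" and z: "\<And>x. x \<notin> closure {x. v x \<noteq> 0} \<Longrightarrow> w x = 0"
  shows "integrable M (\<lambda>x. exp (u x) * w x)"
proof -
  let ?K = "closure {x. v x \<noteq> 0}"
  have K: "compact ?K" "?K \<subseteq> \<Omega>" using v by (auto simp: test_fun_def)
  have Ks: "?K \<in> sets lebesgue" using K(1) by (simp add: compact_imp_closed borel_closed)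
  have "integrable lebesgue (\<lambda>x. indicator ?K x *\<^sub>R exp (u x))"
    using eloc[OF K] by (simp add: set_integrable_def)
  moreover have "(\<lambda>x. indicator \<Omega> x *\<^sub>R (indicator ?K x *\<^sub>R exp (u x))) = (\<lambda>x. indicator ?K x *\<^sub>R exp (u x))"
    using K(2) by (auto simp: indicator_def fun_eq_iff)
  ultimately have i1: "integrable M (\<lambda>x. indicator ?K x *\<^sub>R exp (u x))"
    by (simp add: integrable_restrict_space \<Omega>_sets)
  have i2: "integrable M (\<lambda>x. B * (indicator ?K x *\<^sub>R exp (u x)))"
    using i1 by simp
  have Kmeas[measurable]: "?K \<in> sets M"
    using Ks K(2) by (simp add: sets_restrict_space_iff \<Omega>_sets)
  show ?thesis
  proof (rule Bochner_Integration.integrable_bound[OF i2])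
    show "(\<lambda>x. exp (u x) * w x) \<in> borel_measurable M" by measurable
    show "AE x in M. norm (exp (u x) * w x) \<le> norm (B * (indicator ?K x *\<^sub>R exp (u x)))"
    proof (intro AE_I2)
      fix x
      show "norm (exp (u x) * w x) \<le> norm (B * (indicator ?K x *\<^sub>R exp (u x)))"
      proof (cases "x \<in> ?K")
        case True
        have "\<bar>w x\<bar> \<le> \<bar>B\<bar>" using B[of x] by simp
        then show ?thesis using True by (simp add: abs_mult mult_right_mono)
      next
        case False then show ?thesis using z[OF False] by simp
      qed
    qed
  qed
qed

end



context wsol
begin

lemma test_bdd_sq_int:
  fixes w :: "real^'n \<Rightarrow> real" and B :: real
  assumes "w \<in> borel_measurable M" "\<And>x. \<bar>w x\<bar> \<le> B"
  shows "integrable M (\<lambda>x. (w x)^2)"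
proof (rule Bochner_Integration.integrable_bound[OF const_int[of "B^2"]])
  show "(\<lambda>x. (w x)^2) \<in> borel_measurable M" using assms by measurable
  show "AE x in M. norm ((w x)^2) \<le> norm (B^2)"
  proof (intro AE_I2)
    fix x
    have "\<bar>w x\<bar>^2 \<le> B^2" using assms(2)[of x] by (intro power_mono) auto
    then show "norm ((w x)^2) \<le> norm (B^2)" by simp
  qed
qed

lemma diff_sq_le: "(norm (a - b :: 'v::real_normed_vector))^2 \<le> 2 * (norm a)^2 + 2 * (norm b)^2"
proof -
  have "norm (a - b) \<le> norm a + norm b" by (rule norm_triangle_ineq4)
  then have "(norm (a - b))^2 \<le> (norm a + norm b)^2" by (intro power_mono) auto
  also have "\<dots> \<le> 2 * (norm a)^2 + 2 * (norm b)^2"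
    using young_abs[of 1 "norm a" "norm b"] by (simp add: power2_eq_square algebra_simps)
  finally show ?thesis .
qed

lemma \<psi>_sq_int: "integrable M (\<lambda>x. (\<psi> k x)^2)"
  using test_fun_bounded[OF \<psi>_test[of k]] test_bdd_sq_int[OF \<psi>_meas] by blast

lemma \<psi>_diff_sq_int: "integrable M (\<lambda>x. (\<psi> k x - u x)^2)"
proof (rule Bochner_Integration.integrable_bound[where f="\<lambda>x. 2 * (\<psi> k x)^2 + 2 * (u x)^2"])
  show "integrable M (\<lambda>x. 2 * (\<psi> k x)^2 + 2 * (u x)^2)" using \<psi>_sq_int u_sq by auto
  show "AE x in M. norm ((\<psi> k x - u x)^2) \<le> norm (2 * (\<psi> k x)^2 + 2 * (u x)^2)"
    using diff_sq_le[of "\<psi> k _" "u _"] by auto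
qed measurable

lemma \<psi>_gdiff_sq_int: "integrable M (\<lambda>x. (norm (grad (\<psi> k) x - g x))^2)"
proof -
  obtain B where B: "\<And>x. norm (grad (\<psi> k) x) \<le> B" using test_fun_grad_bounded[OF \<psi>_test[of k]] by blast
  have i: "integrable M (\<lambda>x. (norm (grad (\<psi> k) x))^2)"
    by (rule test_bdd_sq_int[where B=B]) (use B in auto)
  show ?thesis
  proof (rule Bochner_Integration.integrable_bound[where f="\<lambda>x. 2 * (norm (grad (\<psi> k) x))^2 + 2 * (norm (g x))^2"])
    show "integrable M (\<lambda>x. 2 * (norm (grad (\<psi> k) x))^2 + 2 * (norm (g x))^2)" using i g_sq by auto
    show "AE x in M. norm ((norm (grad (\<psi> k) x - g x))^2) \<le> norm (2 * (norm (grad (\<psi> k) x))^2 + 2 * (norm (g x))^2)"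
      using diff_sq_le[of "grad (\<psi> k) _" "g _"] by auto
  qed measurable
qed

definition E :: "nat \<Rightarrow> real" where
  "E k = (\<integral>x. \<bar>norm (grad (\<psi> k) x - g x)\<bar> * \<bar>norm (g x)\<bar> \<partial>M)"

lemma E_int: "integrable M (\<lambda>x. \<bar>norm (grad (\<psi> k) x - g x)\<bar> * \<bar>norm (g x)\<bar>)"
  by (rule L2_abs_prod_integrable) (use \<psi>_gdiff_sq_int g_sq in auto)

lemma E_lim: "E \<longlonglongrightarrow> 0"
  unfolding E_def
  by (rule L2_prod_tendsto[where f="\<lambda>k x. norm (grad (\<psi> k) x - g x)"]) (use \<psi>_gdiff_sq_int g_sq \<psi>_glim in auto)

lemma A_grad_int:
  assumes "test_fun \<Omega> v"
  shows "integrable M (\<lambda>x. A x \<bullet> grad v x)"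
proof -
  obtain B where B: "\<And>x. norm (grad v x) \<le> B" using test_fun_grad_bounded[OF assms] by blast
  have [measurable]: "grad v \<in> borel_measurable M" using test_grad_meas[OF assms] .
  show ?thesis
  proof (rule Bochner_Integration.integrable_bound[where f="\<lambda>x. bF^2 * B * norm (g x)"])
    show "integrable M (\<lambda>x. bF^2 * B * norm (g x))" using norm_g_int by auto
    show "AE x in M. norm (A x \<bullet> grad v x) \<le> norm (bF^2 * B * norm (g x))"
    proof (intro AE_I2)
      fix x
      have "\<bar>A x \<bullet> grad v x\<bar> \<le> bF^2 * norm (g x) * norm (grad v x)" by (rule A_bound2)
      also have "\<dots> \<le> bF^2 * norm (g x) * B" by (intro mult_left_mono B) auto
      moreover have "B \<ge> 0" using B[of x] norm_ge_zero order_trans by blast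
      ultimately show "norm (A x \<bullet> grad v x) \<le> norm (bF^2 * B * norm (g x))"
        using bF_pos by (simp add: algebra_simps abs_mult)
    qed
  qed measurable
qed

lemma u_nonneg: "AE x in M. u x \<ge> 0"
proof -
  define q where "q n = (\<integral>x. exp (u x) * (- theta (\<psi> n x)) \<partial>M)" for n
  have qint: "integrable M (\<lambda>x. exp (u x) * (- theta (\<psi> n x)))" for n
  proof (rule exp_int[OF \<psi>_test[of n]])
    show "(\<lambda>x. - theta (\<psi> n x)) \<in> borel_measurable M" by measurable
    show "\<bar>- theta (\<psi> n x)\<bar> \<le> 1" for x using fl0_nonneg fl0_le1 by (simp add: theta_def)
    show "x \<notin> closure {x. \<psi> n x \<noteq> 0} \<Longrightarrow> - theta (\<psi> n x) = 0" for x
      using fun_outside[of x "\<psi> n"] by (simp add: theta_def fl_def)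
  qed
  have q0: "q n \<ge> 0" for n
    unfolding q_def
  proof (rule integral_nonneg_AE, intro AE_I2)
    fix x show "0 \<le> exp (u x) * - theta (\<psi> n x)"
      using theta_nonpos[of "\<psi> n x"] by (intro mult_nonneg_nonneg) auto
  qed
  have qE: "q n \<le> (4 * bF^2 / lam) * E n" for n
  proof -
    let ?\<phi> = "\<lambda>x. theta (\<psi> n x)"
    have t: "test_fun \<Omega> ?\<phi>" by (rule test_fun_theta[OF \<psi>_test])
    have gr: "grad ?\<phi> x = fl (Suc 0) (- \<psi> n x) *\<^sub>R grad (\<psi> n) x" for x
      by (rule grad_comp[OF theta_deriv]) (use \<psi>_test smooth_diff in \<open>auto simp: test_fun_def\<close>)
    have "lam * (- q n) = lam * (\<integral>x. exp (u x) * ?\<phi> x \<partial>M)"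
      unfolding q_def by simp
    also have "\<dots> = (\<integral>x. A x \<bullet> grad ?\<phi> x \<partial>M)" by (rule weq'[OF t, symmetric])
    also have "\<dots> \<ge> (\<integral>x. - (4 * bF^2) * (\<bar>norm (grad (\<psi> n) x - g x)\<bar> * \<bar>norm (g x)\<bar>) \<partial>M)"
    proof (rule integral_mono)
      show "integrable M (\<lambda>x. - (4 * bF^2) * (\<bar>norm (grad (\<psi> n) x - g x)\<bar> * \<bar>norm (g x)\<bar>))"
        using E_int by auto
      show "integrable M (\<lambda>x. A x \<bullet> grad ?\<phi> x)" by (rule A_grad_int[OF t])
      fix x
      let ?d = "fl (Suc 0) (- \<psi> n x)"
      have d: "0 \<le> ?d" "?d \<le> 4" using fl1_bounds by auto
      have "A x \<bullet> grad ?\<phi> x = ?d * (A x \<bullet> (grad (\<psi> n) x - g x)) + ?d * (F (g x))^2"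
        by (simp add: gr inner_diff_right A_g algebra_simps)
      also have "\<dots> \<ge> ?d * (A x \<bullet> (grad (\<psi> n) x - g x))"
        using d by simp
      finally have 1: "A x \<bullet> grad ?\<phi> x \<ge> ?d * (A x \<bullet> (grad (\<psi> n) x - g x))" .
      have 2: "\<bar>A x \<bullet> (grad (\<psi> n) x - g x)\<bar> \<le> bF^2 * norm (g x) * norm (grad (\<psi> n) x - g x)"
        by (rule A_bound2)
      have "\<bar>?d * (A x \<bullet> (grad (\<psi> n) x - g x))\<bar> \<le> 4 * (bF^2 * norm (g x) * norm (grad (\<psi> n) x - g x))"
        unfolding abs_mult using d 2 by (intro mult_mono) auto
      then show "- (4 * bF^2) * (\<bar>norm (grad (\<psi> n) x - g x)\<bar> * \<bar>norm (g x)\<bar>) \<le> A x \<bullet> grad ?\<phi> x"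
        using 1 by (simp add: algebra_simps)
    qed
    also have "(\<integral>x. - (4 * bF^2) * (\<bar>norm (grad (\<psi> n) x - g x)\<bar> * \<bar>norm (g x)\<bar>) \<partial>M) = - (4 * bF^2) * E n"
      by (simp add: E_def)
    finally have "lam * q n \<le> 4 * bF^2 * E n" by simp
    then show ?thesis using lam_pos by (simp add: field_simps)
  qed
  have qlim: "q \<longlonglongrightarrow> 0"
  proof (rule tendsto_sandwich[where f="\<lambda>_. 0" and h="\<lambda>n. (4 * bF^2 / lam) * E n"])
    show "\<forall>\<^sub>F n in sequentially. 0 \<le> q n" using q0 by simp
    show "\<forall>\<^sub>F n in sequentially. q n \<le> (4 * bF^2 / lam) * E n" using qE by simp
    show "(\<lambda>n. (4 * bF^2 / lam) * E n) \<longlonglongrightarrow> 0" by (rule tendsto_mult_right_zero[OF E_lim])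
  qed simp
  obtain r where r: "strict_mono r" "AE x in M. (\<lambda>n. \<psi> (r n) x) \<longlonglongrightarrow> u x"
    using L2_AE_subseq[OF \<psi>_diff_sq_int \<psi>_lim] by blast
  let ?f = "\<lambda>n x. ennreal (exp (u x) * (- theta (\<psi> (r n) x)))"
  have fatou: "(\<integral>\<^sup>+ x. liminf (\<lambda>n. ?f n x) \<partial>M) \<le> liminf (\<lambda>n. integral\<^sup>N M (?f n))"
    by (rule nn_integral_liminf) measurable
  have "integral\<^sup>N M (?f n) = ennreal (q (r n))" for n
    unfolding q_def
  proof (rule nn_integral_eq_integral[OF qint], intro AE_I2)
    fix x show "0 \<le> exp (u x) * - theta (\<psi> (r n) x)"
      using theta_nonpos[of "\<psi> (r n) x"] by (intro mult_nonneg_nonneg) auto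
  qed
  moreover have "(\<lambda>n. ennreal (q (r n))) \<longlonglongrightarrow> 0"
    using tendsto_ennrealI[OF LIMSEQ_subseq_LIMSEQ[OF qlim r(1)]] by (simp add: o_def)
  ultimately have l0: "liminf (\<lambda>n. integral\<^sup>N M (?f n)) = 0"
    by (simp add: lim_imp_Liminf)
  have "AE x in M. liminf (\<lambda>n. ?f n x) = ennreal (exp (u x) * (- theta (u x)))"
  proof (rule AE_mp[OF r(2)], intro AE_I2 impI)
    fix x assume lim: "(\<lambda>n. \<psi> (r n) x) \<longlonglongrightarrow> u x"
    have "isCont theta (u x)" using theta_cont by (simp add: continuous_on_eq_continuous_at)
    then have "(\<lambda>n. theta (\<psi> (r n) x)) \<longlonglongrightarrow> theta (u x)"
      using isCont_tendsto_compose lim by blast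
    then have "(\<lambda>n. ?f n x) \<longlonglongrightarrow> ennreal (exp (u x) * (- theta (u x)))"
      by (intro tendsto_ennrealI tendsto_intros)
    then show "liminf (\<lambda>n. ?f n x) = ennreal (exp (u x) * (- theta (u x)))"
      by (simp add: lim_imp_Liminf)
  qed
  then have "(\<integral>\<^sup>+ x. liminf (\<lambda>n. ?f n x) \<partial>M) = (\<integral>\<^sup>+ x. ennreal (exp (u x) * (- theta (u x))) \<partial>M)"
    by (rule nn_integral_cong_AE)
  then have "(\<integral>\<^sup>+ x. ennreal (exp (u x) * (- theta (u x))) \<partial>M) = 0"
    using fatou l0 by simp
  then have "AE x in M. ennreal (exp (u x) * (- theta (u x))) = 0"
    by (subst (asm) nn_integral_0_iff_AE) measurable
  then show ?thesis
  proof (rule AE_mp, intro AE_I2 impI)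
    fix x assume "ennreal (exp (u x) * (- theta (u x))) = 0"
    then have "exp (u x) * (- theta (u x)) \<le> 0" by (simp add: ennreal_eq_0_iff)
    then have "- theta (u x) \<le> 0" by (simp add: zero_le_mult_iff)
    then have "\<not> theta (u x) < 0" by simp
    then show "u x \<ge> 0" using theta_neg_iff by (simp add: not_less)
  qed
qed

end



lemma amgm_p: "p > 0 \<Longrightarrow> 2 * h * a * b - p * a^2 \<le> (h^2 / p) * b^2" for p h a b :: real
proof -
  assume p: "p > 0"
  have "0 \<le> (p * a - h * b)^2" by simp
  then have "p * (2 * h * a * b - p * a^2) \<le> h^2 * b^2"
    by (simp add: power2_eq_square algebra_simps)
  then have "2 * h * a * b - p * a^2 \<le> (h^2 * b^2) / p"
    using p by (simp add: le_divide_eq mult.commute)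
  then show ?thesis by simp
qed

lemma smooth_exp: "smooth f \<Longrightarrow> smooth (\<lambda>x. exp (f x))"
  using smooth_comp[OF dseq_exp, of f] by simp

lemma aux_ratio: "(d::real) \<noteq> 0 \<Longrightarrow> e \<noteq> 0 \<Longrightarrow> (1 / d)^2 / (e / d^2) = 1 / e"
  by (simp add: field_simps power2_eq_square)

context wsol
begin

lemma stepE:
  assumes v: "test_fun \<Omega> v" and c: "c > 0"
  shows "(lam / (1 + c)) * (\<integral>x. (v x)^2 \<partial>M) \<le> (\<integral>x. (F (grad v x))^2 \<partial>M)"
proof -
  define H where "H s = 1 / (exp s + c)" for s
  define H' where "H' s = - exp s / (exp s + c)^2" for s
  have pos: "exp s + c > 0" for s using c by (simp add: add_pos_pos)
  have Hpos: "H s > 0" for s using c by (simp add: H_def add_pos_pos)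
  have Hle: "H s \<le> 1 / c" for s using c by (simp add: H_def frac_le add_pos_pos)
  have H'neg: "H' s < 0" for s
  proof -
    have "exp s + c > 0" using c by (simp add: add_pos_pos)
    then have "(exp s + c)^2 > 0" by simp
    then have "exp s / (exp s + c)^2 > 0" by (intro divide_pos_pos) auto
    then show ?thesis by (simp add: H'_def)
  qed
  have H'le: "\<bar>H' s\<bar> \<le> 1 / c" for s
  proof -
    have "exp s / (exp s + c)^2 \<le> 1 / c"
      using c by (simp add: divide_le_eq field_simps power2_eq_square add_pos_pos
          mult_mono' add_increasing)
    then show ?thesis using c by (simp add: H'_def abs_div)
  qed
  have Hd: "(H has_real_derivative H' s) (at s)" for s
    unfolding H_def[abs_def] H'_def using pos[of s]
    by (auto intro!: derivative_eq_intros simp: power2_eq_square)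
  have Hc: "continuous_on UNIV H"
    using Hd by (meson DERIV_continuous continuous_at_imp_continuous_on)
  have H'c: "continuous_on UNIV H'"
    unfolding H'_def[abs_def] using pos
    by (intro continuous_intros) (metis less_irrefl power_eq_0_iff)
  have Hm[measurable]: "H \<in> borel_measurable borel" using borel_measurable_continuous_onI[OF Hc] .
  have H'm[measurable]: "H' \<in> borel_measurable borel" using borel_measurable_continuous_onI[OF H'c] .
  have vm[measurable]: "v \<in> borel_measurable M" using test_meas[OF v] .
  have vgm[measurable]: "grad v \<in> borel_measurable M" using test_grad_meas[OF v] .
  obtain Bv where Bv: "\<And>x. \<bar>v x\<bar> \<le> Bv" using test_fun_bounded[OF v] by blast
  obtain Bg where Bg: "\<And>x. norm (grad v x) \<le> Bg" using test_fun_grad_bounded[OF v] by blast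
  have Bv0: "Bv \<ge> 0" using Bv[of 0] by simp
  have Bg0: "Bg \<ge> 0" using Bg[of 0] norm_ge_zero order_trans by blast
  have vsmooth: "smooth v" using v by (simp add: test_fun_def)
  define \<phi> where "\<phi> n x = v x * (v x * H (\<psi> n x))" for n x
  have Hsmooth: "smooth (\<lambda>x. H (\<psi> n x))" for n
  proof -
    have "smooth (\<lambda>x. 1 / (exp (\<psi> n x) + c))"
      using \<psi>_test[of n] pos
      by (intro smooth_inverse smooth_add smooth_const smooth_exp)
        (auto simp: test_fun_def dest: spec[of _ "\<psi> n _"] | metis less_irrefl)+
    then show ?thesis by (simp add: H_def)
  qed
  have \<phi>test: "test_fun \<Omega> (\<phi> n)" for n
    unfolding \<phi>_def by (intro test_fun_mult_left[OF v] smooth_mult vsmooth Hsmooth)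
  have Agrad: "A x \<bullet> grad (\<phi> n) x = 2 * v x * H (\<psi> n x) * (A x \<bullet> grad v x)
      + v x * v x * H' (\<psi> n x) * (A x \<bullet> grad (\<psi> n) x)" for n x
  proof -
    have d\<psi>: "\<And>x. \<psi> n differentiable (at x)" using \<psi>_test[of n] smooth_diff unfolding test_fun_def by blast
    have dH: "\<And>x. (\<lambda>x. H (\<psi> n x)) differentiable (at x)" using smooth_diff[OF Hsmooth] by simp
    have dW: "\<And>x. (\<lambda>x. v x * H (\<psi> n x)) differentiable (at x)"
      using smooth_diff[OF smooth_mult[OF vsmooth Hsmooth]] by simp
    have g1: "grad (\<phi> n) x = v x *\<^sub>R grad (\<lambda>x. v x * H (\<psi> n x)) x + (v x * H (\<psi> n x)) *\<^sub>R grad v x"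
      unfolding \<phi>_def by (rule grad_mult) (use smooth_diff[OF vsmooth] dW in auto)
    have g2: "grad (\<lambda>x. v x * H (\<psi> n x)) x = v x *\<^sub>R grad (\<lambda>x. H (\<psi> n x)) x + H (\<psi> n x) *\<^sub>R grad v x"
      by (rule grad_mult) (use smooth_diff[OF vsmooth] dH in auto)
    have g3: "grad (\<lambda>x. H (\<psi> n x)) x = H' (\<psi> n x) *\<^sub>R grad (\<psi> n) x"
      by (rule grad_comp[OF Hd d\<psi>])
    show ?thesis
      unfolding g1 g2 g3 inner_add_right inner_scaleR_right by (simp add: algebra_simps)
  qed
  define X where "X n x = 2 * v x * H (\<psi> n x) * (A x \<bullet> grad v x) + v x * v x * H' (\<psi> n x) * (F (g x))^2" for n x
  define Y where "Y n x = v x * v x * H' (\<psi> n x) * (A x \<bullet> (grad (\<psi> n) x - g x))" for n x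
  define Xinf where "Xinf x = 2 * v x * H (u x) * (A x \<bullet> grad v x) + v x * v x * H' (u x) * (F (g x))^2" for x
  have XY: "A x \<bullet> grad (\<phi> n) x = X n x + Y n x" for n x
    by (simp add: Agrad X_def Y_def inner_diff_right A_g algebra_simps)
  have Xm[measurable]: "X n \<in> borel_measurable M" for n unfolding X_def[abs_def] by measurable
  have Ym[measurable]: "Y n \<in> borel_measurable M" for n unfolding Y_def[abs_def] by measurable
  have Xinfm[measurable]: "Xinf \<in> borel_measurable M" unfolding Xinf_def[abs_def] by measurable
  define CY where "CY = Bv^2 * (1 / c) * bF^2"
  have CY0: "CY \<ge> 0" using c by (simp add: CY_def)
  have Ybound: "\<bar>Y n x\<bar> \<le> CY * (\<bar>norm (grad (\<psi> n) x - g x)\<bar> * \<bar>norm (g x)\<bar>)" for n x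
  proof -
    have "\<bar>Y n x\<bar> = (\<bar>v x\<bar> * \<bar>v x\<bar>) * \<bar>H' (\<psi> n x)\<bar> * \<bar>A x \<bullet> (grad (\<psi> n) x - g x)\<bar>"
      by (simp add: Y_def abs_mult)
    also have "\<dots> \<le> (Bv * Bv) * (1 / c) * (bF^2 * norm (g x) * norm (grad (\<psi> n) x - g x))"
      by (intro mult_mono H'le A_bound2 Bv) (auto simp: Bv0 c less_imp_le)
    finally show ?thesis by (simp add: CY_def power2_eq_square algebra_simps)
  qed
  have Yint: "integrable M (Y n)" for n
  proof (rule Bochner_Integration.integrable_bound[where f="\<lambda>x. CY * (\<bar>norm (grad (\<psi> n) x - g x)\<bar> * \<bar>norm (g x)\<bar>)"])
    show "integrable M (\<lambda>x. CY * (\<bar>norm (grad (\<psi> n) x - g x)\<bar> * \<bar>norm (g x)\<bar>))" using E_int by auto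
    show "AE x in M. norm (Y n x) \<le> norm (CY * (\<bar>norm (grad (\<psi> n) x - g x)\<bar> * \<bar>norm (g x)\<bar>))"
      using Ybound CY0 by (auto intro!: AE_I2 simp: abs_mult)
  qed measurable
  have Xint: "integrable M (X n)" for n
  proof -
    have "integrable M (\<lambda>x. A x \<bullet> grad (\<phi> n) x - Y n x)"
      using A_grad_int[OF \<phi>test] Yint by auto
    moreover have "(\<lambda>x. A x \<bullet> grad (\<phi> n) x - Y n x) = X n" by (rule ext) (simp add: XY)
    ultimately show ?thesis by simp
  qed
  have Ylim: "(\<lambda>n. \<integral>x. Y n x \<partial>M) \<longlonglongrightarrow> 0"
  proof (rule Lim_null_comparison[OF _ tendsto_mult_right_zero[OF E_lim, of CY]])
    show "\<forall>\<^sub>F n in sequentially. norm (\<integral>x. Y n x \<partial>M) \<le> CY * E n"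
    proof (intro always_eventually allI)
      fix n
      have "norm (\<integral>x. Y n x \<partial>M) \<le> (\<integral>x. norm (Y n x) \<partial>M)" by (rule integral_norm_bound)
      also have "\<dots> \<le> (\<integral>x. CY * (\<bar>norm (grad (\<psi> n) x - g x)\<bar> * \<bar>norm (g x)\<bar>) \<partial>M)"
        by (rule integral_mono) (use Yint E_int Ybound in auto)
      also have "\<dots> = CY * E n" by (simp add: E_def)
      finally show "norm (\<integral>x. Y n x \<partial>M) \<le> CY * E n" .
    qed
  qed
  have eqn: "(\<integral>x. X n x \<partial>M) + (\<integral>x. Y n x \<partial>M) = lam * (\<integral>x. exp (u x) * \<phi> n x \<partial>M)" for n
  proof -
    have "(\<integral>x. X n x \<partial>M) + (\<integral>x. Y n x \<partial>M) = (\<integral>x. X n x + Y n x \<partial>M)"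
      using Xint Yint by simp
    also have "\<dots> = (\<integral>x. A x \<bullet> grad (\<phi> n) x \<partial>M)" by (simp add: XY)
    also have "\<dots> = lam * (\<integral>x. exp (u x) * \<phi> n x \<partial>M)" by (rule weq'[OF \<phi>test])
    finally show ?thesis .
  qed
  obtain r where r: "strict_mono r" "AE x in M. (\<lambda>n. \<psi> (r n) x) \<longlonglongrightarrow> u x"
    using L2_AE_subseq[OF \<psi>_diff_sq_int \<psi>_lim] by blast
  have isH: "isCont H s" for s using Hc by (simp add: continuous_on_eq_continuous_at)
  have isH': "isCont H' s" for s using H'c by (simp add: continuous_on_eq_continuous_at)
  define WX where "WX x = 2 * Bv * (1 / c) * (bF^2 * norm (g x) * Bg) + Bv^2 * (1 / c) * (bF^2 * (norm (g x))^2)" for x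
  have WXint: "integrable M WX" unfolding WX_def using norm_g_int g_sq by auto
  have Xbound: "\<bar>X n x\<bar> \<le> WX x" for n x
  proof -
    have 1: "\<bar>2 * v x * H (\<psi> n x) * (A x \<bullet> grad v x)\<bar> \<le> 2 * Bv * (1 / c) * (bF^2 * norm (g x) * Bg)"
    proof -
      have "\<bar>A x \<bullet> grad v x\<bar> \<le> bF^2 * norm (g x) * Bg"
        using A_bound2[of x "grad v x"] Bg[of x] bF_pos
        by (meson mult_left_mono norm_ge_zero order_trans zero_le_power2 mult_nonneg_nonneg)
      then show ?thesis unfolding abs_mult
        using Bv[of x] Hle[of "\<psi> n x"] Hpos[of "\<psi> n x"] c Bv0 by (intro mult_mono) auto
    qed
    have Fg: "(F (g x))^2 \<le> bF^2 * (norm (g x))^2"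
      using Fbound[of "g x"] Fnonneg[of "g x"] by (metis power_mono power_mult_distrib)
    have 2: "\<bar>v x * v x * H' (\<psi> n x) * (F (g x))^2\<bar> \<le> Bv^2 * (1 / c) * (bF^2 * (norm (g x))^2)"
    proof -
      have "\<bar>v x\<bar> * \<bar>v x\<bar> \<le> Bv * Bv" using Bv[of x] by (intro mult_mono) auto
      then have "\<bar>v x * v x\<bar> \<le> Bv^2" by (simp add: abs_mult power2_eq_square)
      then show ?thesis unfolding abs_mult[of _ "(F (g x))^2"] abs_mult[of "v x * v x"]
        using H'le[of "\<psi> n x"] Fg c by (intro mult_mono) auto
    qed
    show ?thesis using 1 2 unfolding X_def WX_def by (simp add: abs_triangle_ineq order_trans[OF abs_triangle_ineq])
  qed
  have Xlim: "(\<lambda>n. \<integral>x. X (r n) x \<partial>M) \<longlonglongrightarrow> (\<integral>x. Xinf x \<partial>M)"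
  proof (rule integral_dominated_convergence[where w=WX])
    show "AE x in M. (\<lambda>n. X (r n) x) \<longlonglongrightarrow> Xinf x"
    proof (rule AE_mp[OF r(2)], intro AE_I2 impI)
      fix x assume l: "(\<lambda>n. \<psi> (r n) x) \<longlonglongrightarrow> u x"
      have "(\<lambda>n. H (\<psi> (r n) x)) \<longlonglongrightarrow> H (u x)" using isCont_tendsto_compose[OF isH l] .
      moreover have "(\<lambda>n. H' (\<psi> (r n) x)) \<longlonglongrightarrow> H' (u x)" using isCont_tendsto_compose[OF isH' l] .
      ultimately show "(\<lambda>n. X (r n) x) \<longlonglongrightarrow> Xinf x"
        unfolding X_def Xinf_def by (intro tendsto_intros)
    qed
    show "AE x in M. norm (X (r n) x) \<le> WX x" for n using Xbound by auto
  qed (use WXint in auto)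
  have Xinfint: "integrable M Xinf"
  proof (rule integrable_dominated_convergence[where w=WX and s="\<lambda>n. X (r n)"])
    show "AE x in M. (\<lambda>n. X (r n) x) \<longlonglongrightarrow> Xinf x"
    proof (rule AE_mp[OF r(2)], intro AE_I2 impI)
      fix x assume l: "(\<lambda>n. \<psi> (r n) x) \<longlonglongrightarrow> u x"
      have "(\<lambda>n. H (\<psi> (r n) x)) \<longlonglongrightarrow> H (u x)" using isCont_tendsto_compose[OF isH l] .
      moreover have "(\<lambda>n. H' (\<psi> (r n) x)) \<longlonglongrightarrow> H' (u x)" using isCont_tendsto_compose[OF isH' l] .
      ultimately show "(\<lambda>n. X (r n) x) \<longlonglongrightarrow> Xinf x"
        unfolding X_def Xinf_def by (intro tendsto_intros)
    qed
    show "AE x in M. norm (X (r n) x) \<le> WX x" for n using Xbound by auto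
  qed (use WXint in auto)
  define Rinf where "Rinf x = exp (u x) * (v x * (v x * H (u x)))" for x
  have WRint: "integrable M (\<lambda>x. exp (u x) * ((v x)^2 / c))"
  proof (rule exp_int[OF v])
    show "(\<lambda>x. (v x)^2 / c) \<in> borel_measurable M" by measurable
    show "\<bar>(v x)^2 / c\<bar> \<le> Bv^2 / c" for x
    proof -
      have "\<bar>v x\<bar>^2 \<le> Bv^2" using Bv[of x] by (intro power_mono) auto
      then have "(v x)^2 / c \<le> Bv^2 / c" using c by (intro divide_right_mono) auto
      then show ?thesis using c by simp
    qed
    show "x \<notin> closure {x. v x \<noteq> 0} \<Longrightarrow> (v x)^2 / c = 0" for x using fun_outside[of x v] by simp
  qed
  have Rbound: "\<bar>exp (u x) * \<phi> n x\<bar> \<le> exp (u x) * ((v x)^2 / c)" for n x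
  proof -
    have "\<bar>\<phi> n x\<bar> = (v x)^2 * H (\<psi> n x)" using Hpos[of "\<psi> n x"] by (simp add: \<phi>_def abs_mult power2_eq_square)
    also have "\<dots> \<le> (v x)^2 * (1 / c)" by (intro mult_left_mono Hle) auto
    finally have "\<bar>\<phi> n x\<bar> \<le> (v x)^2 / c" by simp
    then have "exp (u x) * \<bar>\<phi> n x\<bar> \<le> exp (u x) * ((v x)^2 / c)" by (intro mult_left_mono) auto
    then show ?thesis by (simp add: abs_mult)
  qed
  have Rinfm[measurable]: "Rinf \<in> borel_measurable M" unfolding Rinf_def[abs_def] by measurable
  have \<phi>m[measurable]: "(\<lambda>x. exp (u x) * \<phi> n x) \<in> borel_measurable M" for n unfolding \<phi>_def by measurable
  have Rlim: "(\<lambda>n. \<integral>x. exp (u x) * \<phi> (r n) x \<partial>M) \<longlonglongrightarrow> (\<integral>x. Rinf x \<partial>M)"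
  proof (rule integral_dominated_convergence[where w="\<lambda>x. exp (u x) * ((v x)^2 / c)"])
    show "AE x in M. (\<lambda>n. exp (u x) * \<phi> (r n) x) \<longlonglongrightarrow> Rinf x"
    proof (rule AE_mp[OF r(2)], intro AE_I2 impI)
      fix x assume l: "(\<lambda>n. \<psi> (r n) x) \<longlonglongrightarrow> u x"
      have "(\<lambda>n. H (\<psi> (r n) x)) \<longlonglongrightarrow> H (u x)" using isCont_tendsto_compose[OF isH l] .
      then show "(\<lambda>n. exp (u x) * \<phi> (r n) x) \<longlonglongrightarrow> Rinf x"
        unfolding \<phi>_def Rinf_def by (intro tendsto_intros)
    qed
    show "AE x in M. norm (exp (u x) * \<phi> (r n) x) \<le> exp (u x) * ((v x)^2 / c)" for n
      using Rbound by auto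
  qed (use WRint in auto)
  have Rinfint: "integrable M Rinf"
  proof (rule integrable_dominated_convergence[where w="\<lambda>x. exp (u x) * ((v x)^2 / c)" and s="\<lambda>n x. exp (u x) * \<phi> (r n) x"])
    show "AE x in M. (\<lambda>n. exp (u x) * \<phi> (r n) x) \<longlonglongrightarrow> Rinf x"
    proof (rule AE_mp[OF r(2)], intro AE_I2 impI)
      fix x assume l: "(\<lambda>n. \<psi> (r n) x) \<longlonglongrightarrow> u x"
      have "(\<lambda>n. H (\<psi> (r n) x)) \<longlonglongrightarrow> H (u x)" using isCont_tendsto_compose[OF isH l] .
      then show "(\<lambda>n. exp (u x) * \<phi> (r n) x) \<longlonglongrightarrow> Rinf x"
        unfolding \<phi>_def Rinf_def by (intro tendsto_intros)
    qed
    show "AE x in M. norm (exp (u x) * \<phi> (r n) x) \<le> exp (u x) * ((v x)^2 / c)" for n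
      using Rbound by auto
  qed (use WRint in auto)
  have "(\<lambda>n. (\<integral>x. X (r n) x \<partial>M) + (\<integral>x. Y (r n) x \<partial>M)) \<longlonglongrightarrow> (\<integral>x. Xinf x \<partial>M) + 0"
    using Xlim LIMSEQ_subseq_LIMSEQ[OF Ylim r(1)] by (intro tendsto_add) (auto simp: o_def)
  moreover have "(\<lambda>n. (\<integral>x. X (r n) x \<partial>M) + (\<integral>x. Y (r n) x \<partial>M)) \<longlonglongrightarrow> lam * (\<integral>x. Rinf x \<partial>M)"
    unfolding eqn by (intro tendsto_mult_left Rlim)
  ultimately have lim_eq0: "(\<integral>x. Xinf x \<partial>M) + 0 = lam * (\<integral>x. Rinf x \<partial>M)"
    by (rule LIMSEQ_unique)
  then have lim_eq: "(\<integral>x. Xinf x \<partial>M) = lam * (\<integral>x. Rinf x \<partial>M)" by simp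
  have Fgv_int: "integrable M (\<lambda>x. (F (grad v x))^2)"
  proof (rule test_bdd_sq_int[where B="bF * Bg"])
    show "(\<lambda>x. F (grad v x)) \<in> borel_measurable M" by measurable
    show "\<bar>F (grad v x)\<bar> \<le> bF * Bg" for x
      using Fbound[of "grad v x"] Fnonneg[of "grad v x"] Bg[of x] bF_pos
      by (simp add: order_trans[OF _ mult_left_mono])
  qed
  have v2int: "integrable M (\<lambda>x. (v x)^2)"
    by (rule test_bdd_sq_int[where B=Bv]) (use Bv in auto)
  have p1: "AE x in M. Xinf x \<le> (F (grad v x))^2"
  proof (rule AE_mp[OF u_nonneg], intro AE_I2 impI)
    fix x assume u0: "0 \<le> u x"
    let ?h = "H (u x)" and ?p = "- H' (u x)"
    have p0: "?p > 0" using H'neg by simp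
    have "A x \<bullet> grad v x \<le> F (g x) * F (grad v x)" using A_bound[of x "grad v x"] by simp
    have t1: "2 * v x * ?h * (A x \<bullet> grad v x) \<le> 2 * ?h * (\<bar>v x\<bar> * F (g x)) * F (grad v x)"
    proof -
      have "v x * (A x \<bullet> grad v x) \<le> \<bar>v x * (A x \<bullet> grad v x)\<bar>" by (rule abs_ge_self)
      also have "\<dots> = \<bar>v x\<bar> * \<bar>A x \<bullet> grad v x\<bar>" by (rule abs_mult)
      also have "\<dots> \<le> \<bar>v x\<bar> * (F (g x) * F (grad v x))"
        by (intro mult_left_mono A_bound) auto
      finally have "v x * (A x \<bullet> grad v x) \<le> \<bar>v x\<bar> * (F (g x) * F (grad v x))" .
      then show ?thesis using Hpos[of "u x"] by (simp add: algebra_simps mult_left_mono)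
    qed
    have t2: "v x * v x * H' (u x) * (F (g x))^2 = - ?p * (\<bar>v x\<bar> * F (g x))^2"
      by (simp add: power2_eq_square abs_mult_self algebra_simps)
    have "Xinf x \<le> 2 * ?h * (\<bar>v x\<bar> * F (g x)) * F (grad v x) - ?p * (\<bar>v x\<bar> * F (g x))^2"
      unfolding Xinf_def t2 using t1 by simp
    also have "\<dots> \<le> (?h^2 / ?p) * (F (grad v x))^2" by (rule amgm_p[OF p0])
    also have "?h^2 / ?p = exp (- u x)"
    proof -
      have "?h^2 / ?p = (1 / (exp (u x) + c))^2 / (exp (u x) / (exp (u x) + c)^2)"
        by (simp add: H_def H'_def)
      also have "\<dots> = 1 / exp (u x)"
        by (rule aux_ratio) (use pos[of "u x"] in auto)
      finally show ?thesis by (simp add: exp_minus inverse_eq_divide)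
    qed
    also have "exp (- u x) * (F (grad v x))^2 \<le> 1 * (F (grad v x))^2"
      using u0 by (intro mult_right_mono) auto
    finally show "Xinf x \<le> (F (grad v x))^2" by simp
  qed
  have p2: "AE x in M. (lam / (1 + c)) * (v x)^2 \<le> lam * Rinf x"
  proof (rule AE_mp[OF u_nonneg], intro AE_I2 impI)
    fix x assume u0: "0 \<le> u x"
    have "1 / (1 + c) \<le> exp (u x) * H (u x)"
    proof -
      have e1: "exp (u x) \<ge> 1" using u0 by simp
      have "exp (u x) + c \<le> exp (u x) * (1 + c)" using e1 c by (simp add: algebra_simps)
      then show ?thesis using c by (simp add: H_def divide_simps add_pos_pos)
    qed
    then have q1: "(v x)^2 * (1 / (1 + c)) \<le> (v x)^2 * (exp (u x) * H (u x))"
      by (rule mult_left_mono) simp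
    have "lam * ((v x)^2 * (1 / (1 + c))) \<le> lam * ((v x)^2 * (exp (u x) * H (u x)))"
      by (rule mult_left_mono[OF q1]) (use lam_pos in simp)
    then show "(lam / (1 + c)) * (v x)^2 \<le> lam * Rinf x"
      by (simp add: Rinf_def power2_eq_square algebra_simps)
  qed
  have "(lam / (1 + c)) * (\<integral>x. (v x)^2 \<partial>M) = (\<integral>x. (lam / (1 + c)) * (v x)^2 \<partial>M)" by simp
  also have "\<dots> \<le> (\<integral>x. lam * Rinf x \<partial>M)"
    by (rule integral_mono_AE) (use v2int Rinfint p2 in auto)
  also have "\<dots> = (\<integral>x. Xinf x \<partial>M)" using lim_eq by simp
  also have "\<dots> \<le> (\<integral>x. (F (grad v x))^2 \<partial>M)"
    by (rule integral_mono_AE) (use Xinfint Fgv_int p1 in auto)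
  finally show ?thesis .
qed

end



context wsol
begin

lemma stepE_final:
  assumes v: "test_fun \<Omega> v"
  shows "lam * (\<integral>x. (v x)^2 \<partial>M) \<le> (\<integral>x. (F (grad v x))^2 \<partial>M)"
proof -
  let ?P = "lam * (\<integral>x. (v x)^2 \<partial>M)" and ?Q = "(\<integral>x. (F (grad v x))^2 \<partial>M)"
  have Q0: "?Q \<ge> 0" by simp
  have P0: "?P \<ge> 0" using lam_pos by simp
  show ?thesis
  proof (rule field_le_epsilon)
    fix e :: real assume e: "e > 0"
    define c where "c = e / (?Q + 1)"
    have "?Q + 1 > 0" using Q0 by linarith
    then have c: "c > 0" using e by (simp add: c_def)
    have "?P / (1 + c) \<le> ?Q" using stepE[OF v c] by simp
    then have "?P \<le> ?Q * (1 + c)" using c by (simp add: divide_le_eq)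
    also have "\<dots> = ?Q + ?Q * c" by (simp add: algebra_simps)
    also have "?Q * c \<le> e"
    proof -
      have "?Q * c = e * (?Q / (?Q + 1))" using Q0 by (simp add: c_def field_simps)
      also have "\<dots> \<le> e * 1"
      proof (intro mult_left_mono)
        have "?Q + 1 > 0" using Q0 by linarith
        then show "?Q / (?Q + 1) \<le> 1" by (simp add: divide_le_eq)
      qed (use e in auto)
      finally show ?thesis by simp
    qed
    finally show "?P \<le> ?Q + e" by simp
  qed
qed

end

locale apx = Fnorm F for F :: "real^'n::finite \<Rightarrow> real" +
  fixes \<Omega> :: "(real^'n) set" and u :: "real^'n \<Rightarrow> real"
    and g :: "real^'n \<Rightarrow> real^'n" and \<psi> :: "nat \<Rightarrow> real^'n \<Rightarrow> real" and bF :: real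
  assumes Fnonneg: "\<And>\<xi>. F \<xi> \<ge> 0"
    and Fbound: "\<And>\<xi>. F \<xi> \<le> bF * norm \<xi>"
    and bF_pos: "bF > 0"
    and Fmeas[measurable]: "F \<in> borel_measurable borel"
    and \<Omega>open: "open \<Omega>" and \<Omega>bdd: "bounded \<Omega>"
    and u_meas[measurable]: "u \<in> borel_measurable (lebesgue_on \<Omega>)"
    and u_sq: "integrable (lebesgue_on \<Omega>) (\<lambda>x. (u x)^2)"
    and g_meas[measurable]: "g \<in> borel_measurable (lebesgue_on \<Omega>)"
    and g_sq: "integrable (lebesgue_on \<Omega>) (\<lambda>x. (norm (g x))^2)"
    and \<psi>_test: "\<And>k. test_fun \<Omega> (\<psi> k)"
    and \<psi>_lim: "(\<lambda>k. \<integral>x. (\<psi> k x - u x)^2 \<partial>lebesgue_on \<Omega>) \<longlonglongrightarrow> 0"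
    and \<psi>_glim: "(\<lambda>k. \<integral>x. (norm (grad (\<psi> k) x - g x))^2 \<partial>lebesgue_on \<Omega>) \<longlonglongrightarrow> 0"
begin

abbreviation "M \<equiv> lebesgue_on \<Omega>"

lemma \<Omega>_sets: "\<Omega> \<in> sets lebesgue"
  using lmeasurable_open[OF \<Omega>bdd \<Omega>open] by auto

lemma fin: "finite_measure M"
proof -
  have "emeasure lebesgue \<Omega> \<noteq> top" using lmeasurable_open[OF \<Omega>bdd \<Omega>open] fmeasurableD2 by blast
  then show ?thesis
    by (intro finite_measureI) (simp add: emeasure_restrict_space \<Omega>_sets space_restrict_space)
qed

lemma meas_cont: "continuous_on UNIV f \<Longrightarrow> f \<in> borel_measurable M"
  by (rule continuous_imp_measurable_on_sets_lebesgue[OF continuous_on_subset \<Omega>_sets]) auto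

lemma test_meas: "test_fun \<Omega> v \<Longrightarrow> v \<in> borel_measurable M"
  by (rule meas_cont) (auto simp: test_fun_def smooth_cont)

lemma test_grad_meas: "test_fun \<Omega> v \<Longrightarrow> grad v \<in> borel_measurable M"
  by (rule meas_cont) (auto simp: test_fun_def smooth_grad_cont)

lemma \<psi>_meas[measurable]: "\<psi> k \<in> borel_measurable M"
  using test_meas[OF \<psi>_test] .

lemma \<psi>_grad_meas[measurable]: "grad (\<psi> k) \<in> borel_measurable M"
  using test_grad_meas[OF \<psi>_test] .

lemma const_int: "integrable M (\<lambda>x. c::real)"
  using finite_measure.integrable_const[OF fin] .

lemma bdd_sq_int:
  fixes w :: "real^'n \<Rightarrow> real" and B :: real
  assumes "w \<in> borel_measurable M" "\<And>x. \<bar>w x\<bar> \<le> B"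
  shows "integrable M (\<lambda>x. (w x)^2)"
proof (rule Bochner_Integration.integrable_bound[OF const_int[of "B^2"]])
  show "(\<lambda>x. (w x)^2) \<in> borel_measurable M" using assms by measurable
  show "AE x in M. norm ((w x)^2) \<le> norm (B^2)"
  proof (intro AE_I2)
    fix x
    have "\<bar>w x\<bar>^2 \<le> B^2" using assms(2)[of x] by (intro power_mono) auto
    then show "norm ((w x)^2) \<le> norm (B^2)" by simp
  qed
qed

lemma diff_sq_le2: "(norm (a - b :: 'v::real_normed_vector))^2 \<le> 2 * (norm a)^2 + 2 * (norm b)^2"
proof -
  have "norm (a - b) \<le> norm a + norm b" by (rule norm_triangle_ineq4)
  then have "(norm (a - b))^2 \<le> (norm a + norm b)^2" by (intro power_mono) auto
  also have "\<dots> \<le> 2 * (norm a)^2 + 2 * (norm b)^2"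
    using young_abs[of 1 "norm a" "norm b"] by (simp add: power2_eq_square algebra_simps)
  finally show ?thesis .
qed

lemma \<psi>_sq_int: "integrable M (\<lambda>x. (\<psi> k x)^2)"
  using test_fun_bounded[OF \<psi>_test[of k]] bdd_sq_int[OF \<psi>_meas] by blast

lemma \<psi>_gdiff_sq_int: "integrable M (\<lambda>x. (norm (grad (\<psi> k) x - g x))^2)"
proof -
  obtain B where B: "\<And>x. norm (grad (\<psi> k) x) \<le> B" using test_fun_grad_bounded[OF \<psi>_test[of k]] by blast
  have i: "integrable M (\<lambda>x. (norm (grad (\<psi> k) x))^2)"
    by (rule bdd_sq_int[where B=B]) (use B in auto)
  show ?thesis
  proof (rule Bochner_Integration.integrable_bound[where f="\<lambda>x. 2 * (norm (grad (\<psi> k) x))^2 + 2 * (norm (g x))^2"])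
    show "integrable M (\<lambda>x. 2 * (norm (grad (\<psi> k) x))^2 + 2 * (norm (g x))^2)" using i g_sq by auto
    show "AE x in M. norm ((norm (grad (\<psi> k) x - g x))^2) \<le> norm (2 * (norm (grad (\<psi> k) x))^2 + 2 * (norm (g x))^2)"
      using diff_sq_le2[of "grad (\<psi> k) _" "g _"] by auto
  qed measurable
qed

lemma sq_conv: "(\<lambda>k. \<integral>x. (\<psi> k x)^2 \<partial>M) \<longlonglongrightarrow> (\<integral>x. (u x)^2 \<partial>M)"
  by (rule L2_sq_tendsto) (use \<psi>_sq_int u_sq \<psi>_lim in auto)

lemma Fg_sq_int: "integrable M (\<lambda>x. (F (g x))^2)"
proof (rule Bochner_Integration.integrable_bound[where f="\<lambda>x. bF^2 * (norm (g x))^2"])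
  show "integrable M (\<lambda>x. bF^2 * (norm (g x))^2)" using g_sq by auto
  show "AE x in M. norm ((F (g x))^2) \<le> norm (bF^2 * (norm (g x))^2)"
  proof (intro AE_I2)
    fix x
    have "(F (g x))^2 \<le> (bF * norm (g x))^2"
      using Fbound[of "g x"] Fnonneg[of "g x"] by (intro power_mono) auto
    then show "norm ((F (g x))^2) \<le> norm (bF^2 * (norm (g x))^2)" by (simp add: power_mult_distrib)
  qed
qed measurable

lemma Fdiff_abs: "\<bar>F x - F y\<bar> \<le> bF * norm (x - y)"
proof -
  have "F x - F y \<le> F (x - y)" by (rule Fdiff_le)
  moreover have "F y - F x \<le> F (y - x)" by (rule Fdiff_le)
  moreover have "F (y - x) = F (x - y)" using Fneg[of "x - y"] by simp
  ultimately have "\<bar>F x - F y\<bar> \<le> F (x - y)" by simp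
  then show ?thesis using Fbound[of "x - y"] by simp
qed

lemma F_conv: "(\<lambda>k. \<integral>x. (F (grad (\<psi> k) x))^2 \<partial>M) \<longlonglongrightarrow> (\<integral>x. (F (g x))^2 \<partial>M)"
proof (rule L2_sq_tendsto)
  show "integrable M (\<lambda>x. (F (grad (\<psi> k) x))^2)" for k
  proof -
    obtain B where B: "\<And>x. norm (grad (\<psi> k) x) \<le> B" using test_fun_grad_bounded[OF \<psi>_test[of k]] by blast
    show ?thesis
    proof (rule bdd_sq_int[where B="bF * B"])
      show "(\<lambda>x. F (grad (\<psi> k) x)) \<in> borel_measurable M" by measurable
      show "\<bar>F (grad (\<psi> k) x)\<bar> \<le> bF * B" for x
        using Fbound[of "grad (\<psi> k) x"] Fnonneg[of "grad (\<psi> k) x"] B[of x] bF_pos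
        by (simp add: order_trans[OF _ mult_left_mono])
    qed
  qed
  show "integrable M (\<lambda>x. (F (g x))^2)" by (rule Fg_sq_int)
  show "(\<lambda>k. \<integral>x. (F (grad (\<psi> k) x) - F (g x))^2 \<partial>M) \<longlonglongrightarrow> 0"
  proof (rule tendsto_sandwich[where f="\<lambda>_. 0" and h="\<lambda>k. bF^2 * (\<integral>x. (norm (grad (\<psi> k) x - g x))^2 \<partial>M)"])
    show "\<forall>\<^sub>F k in sequentially. 0 \<le> (\<integral>x. (F (grad (\<psi> k) x) - F (g x))^2 \<partial>M)" by simp
    have pw: "(F (grad (\<psi> k) x) - F (g x))^2 \<le> bF^2 * (norm (grad (\<psi> k) x - g x))^2" for k x
    proof -
      have "\<bar>F (grad (\<psi> k) x) - F (g x)\<bar>^2 \<le> (bF * norm (grad (\<psi> k) x - g x))^2"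
        using Fdiff_abs by (intro power_mono) auto
      then show ?thesis by (simp add: power_mult_distrib)
    qed
    have int2: "integrable M (\<lambda>x. (F (grad (\<psi> k) x) - F (g x))^2)" for k
    proof (rule Bochner_Integration.integrable_bound[where f="\<lambda>x. bF^2 * (norm (grad (\<psi> k) x - g x))^2"])
      show "integrable M (\<lambda>x. bF^2 * (norm (grad (\<psi> k) x - g x))^2)" using \<psi>_gdiff_sq_int by auto
      show "AE x in M. norm ((F (grad (\<psi> k) x) - F (g x))^2) \<le> norm (bF^2 * (norm (grad (\<psi> k) x - g x))^2)"
        using pw by auto
    qed measurable
    show "\<forall>\<^sub>F k in sequentially. (\<integral>x. (F (grad (\<psi> k) x) - F (g x))^2 \<partial>M) \<le> bF^2 * (\<integral>x. (norm (grad (\<psi> k) x - g x))^2 \<partial>M)"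
    proof (intro always_eventually allI)
      fix k
      have "(\<integral>x. (F (grad (\<psi> k) x) - F (g x))^2 \<partial>M) \<le> (\<integral>x. bF^2 * (norm (grad (\<psi> k) x - g x))^2 \<partial>M)"
        by (rule integral_mono) (use int2 \<psi>_gdiff_sq_int pw in auto)
      then show "(\<integral>x. (F (grad (\<psi> k) x) - F (g x))^2 \<partial>M) \<le> bF^2 * (\<integral>x. (norm (grad (\<psi> k) x - g x))^2 \<partial>M)"
        by simp
    qed
    show "(\<lambda>k. bF^2 * (\<integral>x. (norm (grad (\<psi> k) x - g x))^2 \<partial>M)) \<longlonglongrightarrow> 0"
      by (rule tendsto_mult_right_zero[OF \<psi>_glim])
  qed simp
qed measurable

end



lemma tr_meas:
  fixes f :: "'a::euclidean_space \<Rightarrow> 'b::{banach, second_countable_topology}"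
  assumes "\<Omega> \<in> sets lebesgue"
  shows "set_borel_measurable lebesgue \<Omega> f \<longleftrightarrow> f \<in> borel_measurable (lebesgue_on \<Omega>)"
  unfolding set_borel_measurable_def by (rule borel_measurable_restrict_space_iff[symmetric]) (use assms in auto)

lemma tr_int:
  fixes f :: "'a::euclidean_space \<Rightarrow> 'b::{banach, second_countable_topology}"
  assumes "\<Omega> \<in> sets lebesgue"
  shows "set_integrable lebesgue \<Omega> f \<longleftrightarrow> integrable (lebesgue_on \<Omega>) f"
  unfolding set_integrable_def by (rule integrable_restrict_space[symmetric]) (use assms in auto)

lemma tr_lint:
  fixes f :: "'a::euclidean_space \<Rightarrow> 'b::{banach, second_countable_topology}"
  assumes "\<Omega> \<in> sets lebesgue"
  shows "(LINT x:\<Omega>|lebesgue. f x) = integral\<^sup>L (lebesgue_on \<Omega>) f"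
  unfolding set_lebesgue_integral_def by (rule integral_restrict_space[symmetric]) (use assms in auto)

lemma test_W012:
  assumes \<Omega>: "open \<Omega>" "bounded \<Omega>" and v: "test_fun \<Omega> v"
  shows "W012 \<Omega> v (grad v)"
proof -
  have S: "\<Omega> \<in> sets lebesgue" using lmeasurable_open[OF \<Omega>(2,1)] by auto
  have fin: "finite_measure (lebesgue_on \<Omega>)"
  proof -
    have "emeasure lebesgue \<Omega> \<noteq> top" using lmeasurable_open[OF \<Omega>(2,1)] fmeasurableD2 by blast
    then show ?thesis
      by (intro finite_measureI) (simp add: emeasure_restrict_space S space_restrict_space)
  qed
  have vm[measurable]: "v \<in> borel_measurable (lebesgue_on \<Omega>)"
    by (rule continuous_imp_measurable_on_sets_lebesgue[OF continuous_on_subset S])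
      (use v smooth_cont in \<open>auto simp: test_fun_def intro: continuous_on_subset\<close>)
  have gm[measurable]: "grad v \<in> borel_measurable (lebesgue_on \<Omega>)"
    by (rule continuous_imp_measurable_on_sets_lebesgue[OF continuous_on_subset S])
      (use v smooth_grad_cont in \<open>auto simp: test_fun_def intro: continuous_on_subset\<close>)
  obtain B1 where B1: "\<And>x. \<bar>v x\<bar> \<le> B1" using test_fun_bounded[OF v] by blast
  obtain B2 where B2: "\<And>x. norm (grad v x) \<le> B2" using test_fun_grad_bounded[OF v] by blast
  have i1: "integrable (lebesgue_on \<Omega>) (\<lambda>x. (v x)^2)"
  proof (rule Bochner_Integration.integrable_bound[OF finite_measure.integrable_const[OF fin, of "B1^2"]])
    show "AE x in lebesgue_on \<Omega>. norm ((v x)^2) \<le> norm (B1^2)"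
    proof (intro AE_I2)
      fix x have "\<bar>v x\<bar>^2 \<le> B1^2" using B1[of x] by (intro power_mono) auto
      then show "norm ((v x)^2) \<le> norm (B1^2)" by simp
    qed
  qed measurable
  have i2: "integrable (lebesgue_on \<Omega>) (\<lambda>x. (norm (grad v x))^2)"
  proof (rule Bochner_Integration.integrable_bound[OF finite_measure.integrable_const[OF fin, of "B2^2"]])
    show "AE x in lebesgue_on \<Omega>. norm ((norm (grad v x))^2) \<le> norm (B2^2)"
    proof (intro AE_I2)
      fix x have "(norm (grad v x))^2 \<le> B2^2" using B2[of x] by (intro power_mono) auto
      then show "norm ((norm (grad v x))^2) \<le> norm (B2^2)" by simp
    qed
  qed measurable
  show ?thesis
    unfolding W012_def
  proof (intro conjI exI[of _ "\<lambda>k. v"])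
    show "set_borel_measurable lebesgue \<Omega> v" using vm S by (simp add: tr_meas)
    show "set_borel_measurable lebesgue \<Omega> (grad v)" using gm S by (simp add: tr_meas)
    show "set_integrable lebesgue \<Omega> (\<lambda>x. (v x)\<^sup>2)" using i1 S by (simp add: tr_int)
    show "set_integrable lebesgue \<Omega> (\<lambda>x. (norm (grad v x))\<^sup>2)" using i2 S by (simp add: tr_int)
  qed (use v in auto)
qed

lemma bump_exists:
  fixes \<Omega> :: "(real^'n::finite) set"
  assumes \<Omega>: "open \<Omega>" "bounded \<Omega>" "\<Omega> \<noteq> {}"
  shows "\<exists>v. test_fun \<Omega> v \<and> (LINT x:\<Omega>|lebesgue. (v x)^2) \<noteq> 0"
proof -
  have S: "\<Omega> \<in> sets lebesgue" using lmeasurable_open[OF \<Omega>(2,1)] by auto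
  obtain x0 where x0: "x0 \<in> \<Omega>" using \<Omega>(3) by blast
  obtain r where r: "r > 0" "cball x0 r \<subseteq> \<Omega>" using \<Omega>(1) x0 open_contains_cball by blast
  define v where "v x = fl 0 (r^2 - (norm (x - x0))^2)" for x
  have nq: "(norm (x - x0))^2 = (\<Sum>j\<in>UNIV. (x $ j + (- x0 $ j)) * (x $ j + (- x0 $ j)))" for x
    by (simp add: power2_norm_eq_inner inner_vec_def)
  have sq: "smooth (\<lambda>x. \<Sum>j\<in>UNIV. (x $ j + (- x0 $ j)) * (x $ j + (- x0 $ j)))"
    by (intro smooth_sum smooth_mult smooth_add smooth_component smooth_const) auto
  have "smooth (\<lambda>x. fl 0 (r^2 + (-1) * (\<Sum>j\<in>UNIV. (x $ j + (- x0 $ j)) * (x $ j + (- x0 $ j)))))"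
    by (intro smooth_comp[OF dseq_fl] smooth_add smooth_mult smooth_const sq)
  then have sv: "smooth v" unfolding v_def nq by simp
  have supp: "{x. v x \<noteq> 0} = ball x0 r"
  proof (rule set_eqI)
    fix x
    let ?t = "r^2 - (norm (x - x0))^2"
    have i1: "v x \<noteq> 0 \<longleftrightarrow> ?t > 0"
    proof -
      have "v x \<ge> 0" unfolding v_def by (rule fl0_nonneg)
      moreover have "v x > 0 \<longleftrightarrow> ?t > 0" unfolding v_def by (rule fl0_pos)
      ultimately show ?thesis by linarith
    qed
    have n0: "norm (x - x0) \<ge> 0" by simp
    have i2: "?t > 0 \<longleftrightarrow> norm (x - x0) < r"
    proof
      assume "?t > 0"
      then have "(norm (x - x0))^2 < r^2" by simp
      then show "norm (x - x0) < r" by (rule power_less_imp_less_base) (use r(1) in simp)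
    next
      assume "norm (x - x0) < r"
      then have "(norm (x - x0))^2 < r^2" using n0 by (rule power_strict_mono) simp
      then show "?t > 0" by simp
    qed
    have "x \<in> ball x0 r \<longleftrightarrow> norm (x - x0) < r" by (simp add: dist_norm norm_minus_commute)
    then show "x \<in> {x. v x \<noteq> 0} \<longleftrightarrow> x \<in> ball x0 r" using i1 i2 by simp
  qed
  have cl: "closure {x. v x \<noteq> 0} = cball x0 r" using supp r(1) by simp
  have tv: "test_fun \<Omega> v"
    unfolding test_fun_def cl using sv r(2) by simp
  have "(LINT x:\<Omega>|lebesgue. (v x)^2) \<noteq> 0"
  proof
    assume "(LINT x:\<Omega>|lebesgue. (v x)^2) = 0"
    then have z: "integral\<^sup>L (lebesgue_on \<Omega>) (\<lambda>x. (v x)^2) = 0" using S by (simp add: tr_lint)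
    have "W012 \<Omega> v (grad v)" by (rule test_W012[OF \<Omega>(1,2) tv])
    then have int: "integrable (lebesgue_on \<Omega>) (\<lambda>x. (v x)^2)" using S by (simp add: W012_def tr_int)
    have ae: "AE x in lebesgue_on \<Omega>. (v x)^2 = 0"
      using z integral_nonneg_eq_0_iff_AE[OF int] by simp
    have bsets: "ball x0 r \<in> sets (lebesgue_on \<Omega>)"
      using r S by (simp add: sets_restrict_space_iff) (meson ball_subset_cball order_trans)
    have eq: "{x \<in> space (lebesgue_on \<Omega>). \<not> (v x)^2 = 0} = ball x0 r"
      using supp r(2) ball_subset_cball by (auto simp: space_restrict_space)
    have "emeasure (lebesgue_on \<Omega>) (ball x0 r) = 0"
      using ae AE_iff_measurable[OF bsets eq] by simp
    moreover have "emeasure (lebesgue_on \<Omega>) (ball x0 r) = emeasure lborel (ball x0 r)"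
      using r S ball_subset_cball by (subst emeasure_restrict_space) auto
    moreover have "measure lborel (ball x0 r) > 0" using content_ball_pos[OF r(1)] .
    ultimately show False by (simp add: measure_def)
  qed
  then show ?thesis using tv by blast
qed



lemma meas_except0:
  fixes f :: "real^'n::finite \<Rightarrow> real"
  assumes "\<And>\<xi>. \<xi> \<noteq> 0 \<Longrightarrow> f differentiable (at \<xi>)"
  shows "f \<in> borel_measurable borel"
proof (rule borel_measurable_continuous_countable_exceptions[of "{0}"])
  show "continuous_on (- {0}) f"
    by (rule continuous_at_imp_continuous_on)
      (use assms differentiable_imp_continuous_within in auto)
qed simp

theorem theorem1p2:
  fixes F :: "real^'n::finite \<Rightarrow> real" and \<Omega> :: "(real^'n) set" and lam :: real
  assumes "CARD('n) \<ge> 2"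
    and "open \<Omega>" and "connected \<Omega>" and "bounded \<Omega>" and "\<Omega> \<noteq> {}"
    and "finsler_admissible F"
    and "lam > lambda1 F \<Omega>"
  shows "\<not> (\<exists>u. weak_solution F \<Omega> lam u)"
proof
  assume "\<exists>u. weak_solution F \<Omega> lam u"
  then obtain u g where W: "W012 \<Omega> u g"
    and el: "\<And>K. compact K \<and> K \<subseteq> \<Omega> \<Longrightarrow> set_integrable lebesgue K (\<lambda>x. exp (u x))"
    and we: "\<And>\<phi>. test_fun \<Omega> \<phi> \<Longrightarrow>
           (LINT x:\<Omega>|lebesgue. F (g x) * frechet_derivative F (at (g x)) (grad \<phi> x))
             = lam * (LINT x:\<Omega>|lebesgue. exp (u x) * \<phi> x)"
    unfolding weak_solution_def by blast
  have S: "\<Omega> \<in> sets lebesgue" using lmeasurable_open[OF assms(4,2)] by auto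
  have Fnonneg: "\<And>\<xi>. F \<xi> \<ge> 0" and conv: "convex_on UNIV F"
    and Fdiff: "\<And>\<xi>. \<xi> \<noteq> 0 \<Longrightarrow> F differentiable (at \<xi>)"
    and pdd: "\<And>i \<xi>. \<xi> \<noteq> 0 \<Longrightarrow> pd i F differentiable (at \<xi>)"
    and hom: "\<And>t \<xi>. F (t *\<^sub>R \<xi>) = \<bar>t\<bar> * F \<xi>"
    using assms(6) unfolding finsler_admissible_def by blast+
  obtain a b where ab: "0 < a" "a \<le> b" "\<And>\<xi>. a * norm \<xi> \<le> F \<xi> \<and> F \<xi> \<le> b * norm \<xi>"
    using assms(6) unfolding finsler_admissible_def by blast
  have Fbound: "\<And>\<xi>. F \<xi> \<le> b * norm \<xi>" using ab(3) by blast
  have bpos: "b > 0" using ab by simp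
  have Fmeas: "F \<in> borel_measurable borel" by (rule meas_except0[OF Fdiff])
  have pdF_meas: "\<And>i. pd i F \<in> borel_measurable borel" by (rule meas_except0[OF pdd])
  have Fn: "Fnorm F" by unfold_locales (fact conv hom)+
  have u_meas: "u \<in> borel_measurable (lebesgue_on \<Omega>)"
    and u_sq: "integrable (lebesgue_on \<Omega>) (\<lambda>x. (u x)^2)"
    and g_meas: "g \<in> borel_measurable (lebesgue_on \<Omega>)"
    and g_sq: "integrable (lebesgue_on \<Omega>) (\<lambda>x. (norm (g x))^2)"
    using W S unfolding W012_def by (simp_all add: tr_meas tr_int)
  obtain \<psi> where \<psi>_test: "\<And>k. test_fun \<Omega> (\<psi> k)"
    and \<psi>_lim: "(\<lambda>k. \<integral>x. (\<psi> k x - u x)^2 \<partial>lebesgue_on \<Omega>) \<longlonglongrightarrow> 0"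
    and \<psi>_glim: "(\<lambda>k. \<integral>x. (norm (grad (\<psi> k) x - g x))^2 \<partial>lebesgue_on \<Omega>) \<longlonglongrightarrow> 0"
    using W S unfolding W012_def by (auto simp: tr_lint)
  define Sset where "Sset = {(LINT x:\<Omega>|lebesgue. (F (g x))\<^sup>2) / (LINT x:\<Omega>|lebesgue. (u x)\<^sup>2) | u g.
       W012 \<Omega> u g \<and> (LINT x:\<Omega>|lebesgue. (u x)\<^sup>2) \<noteq> 0}"
  have l1: "lambda1 F \<Omega> = Inf Sset" unfolding lambda1_def Sset_def ..
  obtain v0 where v0: "test_fun \<Omega> v0" "(LINT x:\<Omega>|lebesgue. (v0 x)^2) \<noteq> 0"
    using bump_exists[OF assms(2,4,5)] by blast
  have ne: "Sset \<noteq> {}"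
    unfolding Sset_def using test_W012[OF assms(2,4) v0(1)] v0(2) by blast
  have nn: "s \<ge> 0" if "s \<in> Sset" for s
  proof -
    from that obtain w gw where s: "s = (LINT x:\<Omega>|lebesgue. (F (gw x))\<^sup>2) / (LINT x:\<Omega>|lebesgue. (w x)\<^sup>2)"
      unfolding Sset_def by blast
    have "(LINT x:\<Omega>|lebesgue. (F (gw x))\<^sup>2) \<ge> 0" using S by (simp add: tr_lint)
    moreover have "(LINT x:\<Omega>|lebesgue. (w x)\<^sup>2) \<ge> 0" using S by (simp add: tr_lint)
    ultimately show ?thesis using s by simp
  qed
  have l1_nn: "lambda1 F \<Omega> \<ge> 0" unfolding l1 by (rule cInf_greatest[OF ne nn])
  have lam_pos: "lam > 0" using l1_nn assms(7) by simp
  obtain s where s: "s \<in> Sset" "s < lam" using cInf_lessD[OF ne] assms(7) l1 by auto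
  then obtain w gw where Ww: "W012 \<Omega> w gw" and wne: "(LINT x:\<Omega>|lebesgue. (w x)\<^sup>2) \<noteq> 0"
    and seq: "s = (LINT x:\<Omega>|lebesgue. (F (gw x))\<^sup>2) / (LINT x:\<Omega>|lebesgue. (w x)\<^sup>2)"
    unfolding Sset_def by blast
  have el': "\<And>K. compact K \<Longrightarrow> K \<subseteq> \<Omega> \<Longrightarrow> set_integrable lebesgue K (\<lambda>x. exp (u x))"
    using el by blast
  have we': "\<And>\<phi>. test_fun \<Omega> \<phi> \<Longrightarrow>
      (\<integral>x. F (g x) * frechet_derivative F (at (g x)) (grad \<phi> x) \<partial>lebesgue_on \<Omega>)
        = lam * (\<integral>x. exp (u x) * \<phi> x \<partial>lebesgue_on \<Omega>)"
    using we S by (simp add: tr_lint)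
  interpret Wl: wsol F \<Omega> lam u g \<psi> b
    by unfold_locales (fact conv hom Fnonneg Fbound bpos Fdiff Fmeas pdF_meas assms(2) assms(4) lam_pos
        u_meas u_sq g_meas g_sq \<psi>_test \<psi>_lim \<psi>_glim el' we')+
  have w_meas: "w \<in> borel_measurable (lebesgue_on \<Omega>)"
    and w_sq: "integrable (lebesgue_on \<Omega>) (\<lambda>x. (w x)^2)"
    and gw_meas: "gw \<in> borel_measurable (lebesgue_on \<Omega>)"
    and gw_sq: "integrable (lebesgue_on \<Omega>) (\<lambda>x. (norm (gw x))^2)"
    using Ww S unfolding W012_def by (simp_all add: tr_meas tr_int)
  obtain \<phi> where \<phi>_test: "\<And>k. test_fun \<Omega> (\<phi> k)"
    and \<phi>_lim: "(\<lambda>k. \<integral>x. (\<phi> k x - w x)^2 \<partial>lebesgue_on \<Omega>) \<longlonglongrightarrow> 0"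
    and \<phi>_glim: "(\<lambda>k. \<integral>x. (norm (grad (\<phi> k) x - gw x))^2 \<partial>lebesgue_on \<Omega>) \<longlonglongrightarrow> 0"
    using Ww S unfolding W012_def by (auto simp: tr_lint)
  interpret Ap: apx F \<Omega> w gw \<phi> b
    by unfold_locales (fact conv hom Fnonneg Fbound bpos Fmeas assms(2) assms(4)
        w_meas w_sq gw_meas gw_sq \<phi>_test \<phi>_lim \<phi>_glim)+
  let ?Iw = "\<integral>x. (w x)^2 \<partial>lebesgue_on \<Omega>" and ?IF = "\<integral>x. (F (gw x))^2 \<partial>lebesgue_on \<Omega>"
  have Iw_pos: "?Iw > 0"
  proof -
    have "?Iw \<ge> 0" by simp
    moreover have "?Iw \<noteq> 0" using wne S by (simp add: tr_lint)
    ultimately show ?thesis by linarith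
  qed
  have "?IF / ?Iw < lam" using s(2) seq S by (simp add: tr_lint)
  then have key: "lam * ?Iw - ?IF > 0" using Iw_pos by (simp add: divide_less_eq algebra_simps)
  have "(\<lambda>k. lam * (\<integral>x. (\<phi> k x)^2 \<partial>lebesgue_on \<Omega>) - (\<integral>x. (F (grad (\<phi> k) x))^2 \<partial>lebesgue_on \<Omega>))
      \<longlonglongrightarrow> lam * ?Iw - ?IF"
    by (intro tendsto_diff tendsto_mult_left Ap.sq_conv Ap.F_conv)
  from order_tendstoD(1)[OF this key]
  obtain k where "lam * (\<integral>x. (\<phi> k x)^2 \<partial>lebesgue_on \<Omega>) - (\<integral>x. (F (grad (\<phi> k) x))^2 \<partial>lebesgue_on \<Omega>) > 0"
    by (meson eventually_sequentially order_refl)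
  moreover have "lam * (\<integral>x. (\<phi> k x)^2 \<partial>lebesgue_on \<Omega>) \<le> (\<integral>x. (F (grad (\<phi> k) x))^2 \<partial>lebesgue_on \<Omega>)"
    by (rule Wl.stepE_final[OF \<phi>_test])
  ultimately show False by simp
qed


end
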